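(* Let $\alpha\in\ell^2$ and suppose $R_\alpha$ is bounded on $\ell^2$. Let $\mathcal{L}=\lim_{n\to\infty}L([n,\infty))$. Then $\|R_\alpha\|_e=\mathcal{L}/\sqrt2$. In particular, $R_\alpha$ is compact if and only if $\mathcal{L}=0$.
   Context: $\mathbb{N}=\{0,1,2,\dots\}$; $(R_\alpha f)(k)=\alpha_k\sum_{j=0}^kf(j)$. Essential norm: $\|T\|_e=\inf\{\|T-P\|:P$ finite rank$\}$. For a finite natural interval $I$: $\mu(I)=\sum_{k\in I}|\alpha_k|^2$, $\|f\|_{2,I}=(\sum_{k\in I}|f(k)|^2)^{1/2}$, $l(I,f)=\sum_{k\in I}\sum_{n\in I\setminus\{k\}}|\alpha_k\alpha_n\sum_{j=\min(k,n)+1}^{\max(k,n)}f(j)|^2$, $L(I)=(\sup_{\|f\|_{2,I}\le1}l(I,f)/\mu(I))^{1/2}$ (sup over $f$ supported in $I$; $L(I)=0$ if $\alpha$ vanishes on $I$); $L([a,\infty))=\sup_{b\ge a}L([a,b])$. *)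

theory Defs
  imports "HOL-Analysis.Analysis"
begin

definition l2 :: "(nat \<Rightarrow> complex) \<Rightarrow> bool" where
  "l2 f \<longleftrightarrow> summable (\<lambda>k. (cmod (f k))^2)"

definition l2norm :: "(nat \<Rightarrow> complex) \<Rightarrow> real" where
  "l2norm f = sqrt (\<Sum>k. (cmod (f k))^2)"

definition Ralpha :: "(nat \<Rightarrow> complex) \<Rightarrow> (nat \<Rightarrow> complex) \<Rightarrow> (nat \<Rightarrow> complex)" where
  "Ralpha \<alpha> f = (\<lambda>k. \<alpha> k * (\<Sum>j\<le>k. f j))"

text \<open>T is a bounded operator on l2 (only its action on l2 matters).\<close>
definition bounded_op :: "((nat \<Rightarrow> complex) \<Rightarrow> (nat \<Rightarrow> complex)) \<Rightarrow> bool" where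
  "bounded_op T \<longleftrightarrow> (\<forall>f. l2 f \<longrightarrow> l2 (T f)) \<and>
     (\<exists>C. \<forall>f. l2 f \<longrightarrow> l2norm (T f) \<le> C * l2norm f)"

definition linear_op :: "((nat \<Rightarrow> complex) \<Rightarrow> (nat \<Rightarrow> complex)) \<Rightarrow> bool" where
  "linear_op T \<longleftrightarrow> (\<forall>f g. l2 f \<longrightarrow> l2 g \<longrightarrow> T (\<lambda>k. f k + g k) = (\<lambda>k. T f k + T g k)) \<and>
     (\<forall>c f. l2 f \<longrightarrow> T (\<lambda>k. c * f k) = (\<lambda>k. c * T f k))"

definition opnorm :: "((nat \<Rightarrow> complex) \<Rightarrow> (nat \<Rightarrow> complex)) \<Rightarrow> real" where
  "opnorm T = Sup {l2norm (T f) | f. l2 f \<and> l2norm f \<le> 1}"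

definition finite_rank :: "((nat \<Rightarrow> complex) \<Rightarrow> (nat \<Rightarrow> complex)) \<Rightarrow> bool" where
  "finite_rank P \<longleftrightarrow> linear_op P \<and> bounded_op P \<and>
     (\<exists>n::nat. \<exists>v::nat \<Rightarrow> nat \<Rightarrow> complex. (\<forall>i<n. l2 (v i)) \<and>
        (\<forall>f. l2 f \<longrightarrow> (\<exists>c::nat \<Rightarrow> complex. P f = (\<lambda>k. \<Sum>i<n. c i * v i k))))"

definition ess_norm :: "((nat \<Rightarrow> complex) \<Rightarrow> (nat \<Rightarrow> complex)) \<Rightarrow> real" where
  "ess_norm T = Inf {opnorm (\<lambda>f k. T f k - P f k) | P. finite_rank P}"

definition compact_op :: "((nat \<Rightarrow> complex) \<Rightarrow> (nat \<Rightarrow> complex)) \<Rightarrow> bool" where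
  "compact_op T \<longleftrightarrow> (\<forall>F::nat \<Rightarrow> nat \<Rightarrow> complex. \<forall>B.
      (\<forall>m. l2 (F m) \<and> l2norm (F m) \<le> B) \<longrightarrow>
      (\<exists>g r. l2 g \<and> strict_mono r \<and>
          (\<lambda>m. l2norm (\<lambda>k. T (F (r m)) k - g k)) \<longlonglongrightarrow> 0))"

definition mu :: "(nat \<Rightarrow> complex) \<Rightarrow> nat \<Rightarrow> nat \<Rightarrow> real" where
  "mu \<alpha> a b = (\<Sum>k\<in>{a..b}. (cmod (\<alpha> k))^2)"

definition lI :: "(nat \<Rightarrow> complex) \<Rightarrow> nat \<Rightarrow> nat \<Rightarrow> (nat \<Rightarrow> complex) \<Rightarrow> real" where
  "lI \<alpha> a b f = (\<Sum>k\<in>{a..b}. \<Sum>n\<in>{a..b} - {k}.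
      (cmod (\<alpha> k * \<alpha> n * (\<Sum>j\<in>{min k n + 1..max k n}. f j)))^2)"

definition LI :: "(nat \<Rightarrow> complex) \<Rightarrow> nat \<Rightarrow> nat \<Rightarrow> real" where
  "LI \<alpha> a b = (if mu \<alpha> a b = 0 then 0 else
      sqrt (Sup {lI \<alpha> a b f / mu \<alpha> a b | f.
          (\<forall>k. k \<notin> {a..b} \<longrightarrow> f k = 0) \<and> (\<Sum>k\<in>{a..b}. (cmod (f k))^2) \<le> 1}))"

definition Ltail :: "(nat \<Rightarrow> complex) \<Rightarrow> nat \<Rightarrow> real" where
  "Ltail \<alpha> a = Sup {LI \<alpha> a b | b. a \<le> b}"

end

theory Submission
  imports Defs "HOL-Library.Diagonal_Subsequence"
begin


definition ww :: "(nat \<Rightarrow> complex) \<Rightarrow> nat \<Rightarrow> real" where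
  "ww \<alpha> k = (cmod (\<alpha> k))^2"
definition SS :: "(nat \<Rightarrow> complex) \<Rightarrow> nat \<Rightarrow> complex" where
  "SS f k = (\<Sum>j\<le>k. f j)"

lemma ww_nonneg[simp]: "0 \<le> ww \<alpha> k" by (simp add: ww_def)

lemma Ralpha_norm2: "(cmod (Ralpha \<alpha> f k))^2 = ww \<alpha> k * (cmod (SS f k))^2"
  by (simp add: Ralpha_def ww_def SS_def norm_mult power_mult_distrib)

lemma l2norm_nonneg[simp]: "l2 f \<Longrightarrow> 0 \<le> l2norm f"
  by (simp add: l2norm_def l2_def suminf_nonneg)

lemma l2_summable: "l2 f \<Longrightarrow> summable (\<lambda>k. (cmod (f k))^2)"
  by (simp add: l2_def)

lemma l2norm_sq: "l2 f \<Longrightarrow> (l2norm f)^2 = (\<Sum>k. (cmod (f k))^2)"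
  unfolding l2norm_def l2_def by (simp add: suminf_nonneg)

lemma l2_partial_le: "l2 f \<Longrightarrow> (\<Sum>k<n. (cmod (f k))^2) \<le> (l2norm f)^2"
  by (simp add: l2norm_sq l2_def sum_le_suminf)

lemma l2_finite:
  assumes "\<And>j. K \<le> j \<Longrightarrow> f j = 0"
  shows "l2 f" "(l2norm f)^2 = (\<Sum>j<K. (cmod (f j))^2)"
    "l2norm f = sqrt (\<Sum>j<K. (cmod (f j))^2)"
proof -
  have s: "(\<lambda>j. (cmod (f j))^2) sums (\<Sum>j<K. (cmod (f j))^2)"
    by (rule sums_finite) (auto simp: assms)
  then show "l2 f" by (auto simp: l2_def sums_iff)
  then show "(l2norm f)^2 = (\<Sum>j<K. (cmod (f j))^2)" using s
    by (simp add: l2norm_sq sums_iff)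
  show "l2norm f = sqrt (\<Sum>j<K. (cmod (f j))^2)" using s
    by (simp add: l2norm_def sums_iff)
qed

lemma l2_add: assumes "l2 f" "l2 g" shows "l2 (\<lambda>k. f k + g k)"
proof -
  have "(cmod (f k + g k))^2 \<le> 2 * (cmod (f k))^2 + 2 * (cmod (g k))^2" for k
  proof -
    have "cmod (f k + g k) \<le> cmod (f k) + cmod (g k)" by (rule norm_triangle_ineq)
    then have "(cmod (f k + g k))^2 \<le> (cmod (f k) + cmod (g k))^2"
      by (simp add: power_mono)
    also have "\<dots> \<le> 2 * (cmod (f k))^2 + 2 * (cmod (g k))^2"
      using zero_le_power2[of "cmod (f k) - cmod (g k)"]
      unfolding power2_eq_square by (simp add: algebra_simps)
    finally show ?thesis .
  qed
  moreover have "summable (\<lambda>k. 2 * (cmod (f k))^2 + 2 * (cmod (g k))^2)"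
    using assms by (intro summable_add summable_mult) (auto simp: l2_def)
  ultimately show ?thesis unfolding l2_def
    using summable_comparison_test'[where N=0 and f="\<lambda>k. (cmod (f k + g k))^2"
       and g="\<lambda>k. 2 * (cmod (f k))^2 + 2 * (cmod (g k))^2"] by simp
qed

lemma l2_scale: assumes "l2 f" shows "l2 (\<lambda>k. c * f k)"
proof -
  have "summable (\<lambda>k. (cmod c)^2 * (cmod (f k))^2)"
    using assms by (intro summable_mult) (auto simp: l2_def)
  then show ?thesis by (simp add: l2_def norm_mult power_mult_distrib)
qed

lemma l2_diff: assumes "l2 f" "l2 g" shows "l2 (\<lambda>k. f k - g k)"
  using l2_add[OF assms(1) l2_scale[OF assms(2), of "-1"]] by simp

lemma l2_zero[simp]: "l2 (\<lambda>k. 0)"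
  by (simp add: l2_def)

lemma l2_sum: "finite A \<Longrightarrow> (\<And>i. i \<in> A \<Longrightarrow> l2 (g i)) \<Longrightarrow> l2 (\<lambda>k. \<Sum>i\<in>A. d i * g i k)"
proof (induction A rule: finite_induct)
  case empty then show ?case by simp
next
  case (insert x F)
  have e: "(\<lambda>k. \<Sum>i\<in>insert x F. d i * g i k) = (\<lambda>k. d x * g x k + (\<Sum>i\<in>F. d i * g i k))"
    using insert(1,2) by simp
  have "l2 (\<lambda>k. d x * g x k)" using insert(4) by (intro l2_scale) simp
  moreover have "l2 (\<lambda>k. \<Sum>i\<in>F. d i * g i k)" using insert(3,4) by simp
  ultimately show ?case unfolding e by (rule l2_add)
qed

lemma l2norm_triangle:
  assumes "l2 f" "l2 g"
  shows "l2norm (\<lambda>k. f k + g k) \<le> l2norm f + l2norm g"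
proof -
  have "(\<Sum>k<n. (cmod (f k + g k))^2) \<le> (l2norm f + l2norm g)^2" for n
  proof -
    have "L2_set (\<lambda>k. cmod (f k + g k)) {..<n} \<le> L2_set (\<lambda>k. cmod (f k) + cmod (g k)) {..<n}"
      by (rule L2_set_mono) (auto simp: norm_triangle_ineq)
    also have "\<dots> \<le> L2_set (\<lambda>k. cmod (f k)) {..<n} + L2_set (\<lambda>k. cmod (g k)) {..<n}"
      by (rule L2_set_triangle_ineq)
    also have "L2_set (\<lambda>k. cmod (f k)) {..<n} \<le> l2norm f"
    proof -
      have "sqrt (\<Sum>k<n. (cmod (f k))^2) \<le> sqrt ((l2norm f)^2)"
        using l2_partial_le[OF assms(1), of n] by (rule real_sqrt_le_mono)
      then show ?thesis using assms by (simp add: L2_set_def)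
    qed
    also have "L2_set (\<lambda>k. cmod (g k)) {..<n} \<le> l2norm g"
    proof -
      have "sqrt (\<Sum>k<n. (cmod (g k))^2) \<le> sqrt ((l2norm g)^2)"
        using l2_partial_le[OF assms(2), of n] by (rule real_sqrt_le_mono)
      then show ?thesis using assms by (simp add: L2_set_def)
    qed
    finally have "sqrt (\<Sum>k<n. (cmod (f k + g k))^2) \<le> l2norm f + l2norm g"
      by (simp add: L2_set_def)
    note sq = this
    have X0: "0 \<le> (\<Sum>k<n. (cmod (f k + g k))^2)" by (intro sum_nonneg) simp
    then have "(\<Sum>k<n. (cmod (f k + g k))^2) = (sqrt (\<Sum>k<n. (cmod (f k + g k))^2))^2" by simp
    also have "\<dots> \<le> (l2norm f + l2norm g)^2"
      by (rule power_mono[OF sq]) (use X0 in simp)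
    finally show ?thesis .
  qed
  note pb = this
  have sm: "summable (\<lambda>k. (cmod (f k + g k))^2)" using l2_add[OF assms] by (simp add: l2_def)
  have A: "(\<Sum>k. (cmod (f k + g k))^2) \<le> (l2norm f + l2norm g)^2"
    by (rule suminf_le_const[OF sm pb])
  have B: "0 \<le> l2norm f + l2norm g"
    using assms by simp
  have "sqrt (\<Sum>k. (cmod (f k + g k))^2) \<le> l2norm f + l2norm g"
    by (rule real_le_lsqrt[OF B A])
  then show ?thesis by (simp only: l2norm_def)
qed


locale RS =
  fixes \<alpha> :: "nat \<Rightarrow> complex" and C :: real
  assumes l2a: "l2 \<alpha>"
    and Tl2: "\<And>f. l2 f \<Longrightarrow> l2 (Ralpha \<alpha> f)"
    and Tb: "\<And>f. l2 f \<Longrightarrow> l2norm (Ralpha \<alpha> f) \<le> C * l2norm f"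
    and Cnn: "0 \<le> C"
begin

definition GS :: "nat \<Rightarrow> real set" where
  "GS n = {\<Sum>k<K. ww \<alpha> k * (cmod (SS f k))^2 | f K.
      (\<forall>j. f j \<noteq> 0 \<longrightarrow> n \<le> j \<and> j < K) \<and> (\<Sum>j<K. (cmod (f j))^2) \<le> 1}"
definition G :: "nat \<Rightarrow> real" where "G n = Sup (GS n)"

lemma ww_summable: "summable (ww \<alpha>)" using l2a unfolding l2_def by (simp add: ww_def[abs_def])

lemma partial_T: "(\<Sum>k<K. ww \<alpha> k * (cmod (SS f k))^2) = (\<Sum>k<K. (cmod (Ralpha \<alpha> f k))^2)"
  by (simp add: Ralpha_norm2)

lemma T_partial_le: "l2 f \<Longrightarrow> (\<Sum>k<K. ww \<alpha> k * (cmod (SS f k))^2) \<le> (l2norm (Ralpha \<alpha> f))^2"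
  using l2_partial_le[OF Tl2] partial_T by simp

lemma GS_elem_le: assumes "x \<in> GS n" shows "x \<le> C^2"
proof -
  from assms obtain f K where x: "x = (\<Sum>k<K. ww \<alpha> k * (cmod (SS f k))^2)"
    and supp: "\<forall>j. f j \<noteq> 0 \<longrightarrow> n \<le> j \<and> j < K" and nb: "(\<Sum>j<K. (cmod (f j))^2) \<le> 1"
    unfolding GS_def by blast
  have z: "\<And>j. K \<le> j \<Longrightarrow> f j = 0" using supp by force
  note fin = l2_finite[of K f, OF z]
  have "l2norm f \<le> 1" using fin(3) nb by simp
  then have "C * l2norm f \<le> C" using Cnn by (simp add: mult_left_le)
  then have "l2norm (Ralpha \<alpha> f) \<le> C" using Tb[OF fin(1)] by linarith
  then have "(l2norm (Ralpha \<alpha> f))^2 \<le> C^2"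
    using Tl2[OF fin(1)] by (simp add: power_mono)
  then show ?thesis using x T_partial_le[OF fin(1)] by (metis order_trans)
qed

lemma GS_zero: "0 \<in> GS n"
  unfolding GS_def by (rule CollectI, rule exI[of _ "\<lambda>j. 0"], rule exI[of _ 0]) simp

lemma GS_ne: "GS n \<noteq> {}" using GS_zero by blast

lemma GS_bdd: "bdd_above (GS n)"
  using GS_elem_le by (intro bdd_aboveI) blast

lemma G_upper: "x \<in> GS n \<Longrightarrow> x \<le> G n"
  unfolding G_def by (rule cSup_upper[OF _ GS_bdd])

lemma G_nonneg: "0 \<le> G n" using G_upper[OF GS_zero] .

lemma G_le: "G n \<le> C^2"
  unfolding G_def using GS_ne GS_elem_le by (rule cSup_least)

lemma GS_mono: "m \<le> n \<Longrightarrow> GS n \<subseteq> GS m"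
  unfolding GS_def by force

lemma G_mono: "m \<le> n \<Longrightarrow> G n \<le> G m"
  unfolding G_def using GS_ne GS_bdd GS_mono by (rule cSup_subset_mono)

lemma G_approx: assumes "0 < e" shows "\<exists>x\<in>GS n. G n - e < x"
proof -
  have "G n - e < Sup (GS n)" using assms by (simp add: G_def)
  then show ?thesis using less_cSup_iff[OF GS_ne GS_bdd] by blast
qed

lemma G_decseq: "decseq G"
  by (simp add: decseq_def G_mono)

definition Gam :: real where "Gam = lim G"

lemma G_lim: "G \<longlonglongrightarrow> Gam" and Gam_le: "Gam \<le> G n"
proof -
  obtain L where L: "G \<longlonglongrightarrow> L" "\<forall>i. L \<le> G i"
    using decseq_convergent[OF G_decseq, of 0] G_nonneg by blast
  then have "Gam = L" unfolding Gam_def by (simp add: limI)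
  then show "G \<longlonglongrightarrow> Gam" "Gam \<le> G n" using L by auto
qed

lemma Gam_nonneg: "0 \<le> Gam"
  using G_lim G_nonneg by (intro LIMSEQ_le_const) auto

lemma GS_homog:
  assumes supp: "\<forall>j. f j \<noteq> 0 \<longrightarrow> n \<le> j \<and> j < K"
  shows "(\<Sum>k<K. ww \<alpha> k * (cmod (SS f k))^2) \<le> G n * (\<Sum>j<K. (cmod (f j))^2)"
proof (cases "(\<Sum>j<K. (cmod (f j))^2) = 0")
  case True
  then have "\<forall>j<K. f j = 0" by (simp add: sum_nonneg_eq_0_iff)
  then have "\<forall>j. f j = 0" using supp by (metis)
  then show ?thesis by (simp add: SS_def)
next
  case False
  define s where "s = (\<Sum>j<K. (cmod (f j))^2)"
  have s0: "0 < s" using False unfolding s_def by (simp add: order_le_neq_trans sum_nonneg)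
  define c where "c = 1 / sqrt s"
  define g where "g = (\<lambda>j. complex_of_real c * f j)"
  have c2: "c^2 * s = 1" using s0 by (simp add: c_def power_divide)
  have "(\<Sum>j<K. (cmod (g j))^2) = c^2 * s"
    by (simp add: g_def s_def norm_mult power_mult_distrib sum_distrib_left)
  then have gn: "(\<Sum>j<K. (cmod (g j))^2) \<le> 1" using c2 by simp
  have gs: "\<forall>j. g j \<noteq> 0 \<longrightarrow> n \<le> j \<and> j < K" using supp by (simp add: g_def)
  have SSg: "SS g k = c * SS f k" for k by (simp add: SS_def g_def sum_distrib_left)
  have "(\<Sum>k<K. ww \<alpha> k * (cmod (SS g k))^2) \<in> GS n"
    unfolding GS_def using gs gn by blast
  then have "(\<Sum>k<K. ww \<alpha> k * (cmod (SS g k))^2) \<le> G n" by (rule G_upper)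
  moreover have "(\<Sum>k<K. ww \<alpha> k * (cmod (SS g k))^2) = c^2 * (\<Sum>k<K. ww \<alpha> k * (cmod (SS f k))^2)"
    by (simp add: SSg norm_mult power_mult_distrib sum_distrib_left mult_ac)
  ultimately have "c^2 * (\<Sum>k<K. ww \<alpha> k * (cmod (SS f k))^2) \<le> G n" by simp
  then have "s * (c^2 * (\<Sum>k<K. ww \<alpha> k * (cmod (SS f k))^2)) \<le> s * G n"
    using s0 by (simp add: mult_left_mono)
  moreover have "s * (c^2 * (\<Sum>k<K. ww \<alpha> k * (cmod (SS f k))^2)) = (c^2 * s) * (\<Sum>k<K. ww \<alpha> k * (cmod (SS f k))^2)"
    by (simp add: mult_ac)
  ultimately show ?thesis using c2 by (simp add: s_def[symmetric] mult.commute)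
qed

lemma tail_le:
  assumes u: "l2 u" and z: "\<And>j. j < N \<Longrightarrow> u j = 0"
  shows "(l2norm (Ralpha \<alpha> u))^2 \<le> G N * (l2norm u)^2"
proof -
  have "(\<Sum>k<K. (cmod (Ralpha \<alpha> u k))^2) \<le> G N * (l2norm u)^2" for K
  proof -
    define v where "v = (\<lambda>j. if j < K then u j else 0)"
    have SSv: "k < K \<Longrightarrow> SS v k = SS u k" for k
      unfolding SS_def v_def by (rule sum.cong) auto
    have "(\<Sum>k<K. (cmod (Ralpha \<alpha> u k))^2) = (\<Sum>k<K. ww \<alpha> k * (cmod (SS v k))^2)"
      by (simp add: Ralpha_norm2 SSv)
    also have "\<dots> \<le> G N * (\<Sum>j<K. (cmod (v j))^2)"
      by (rule GS_homog) (auto simp: v_def z not_less[symmetric])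
    also have "(\<Sum>j<K. (cmod (v j))^2) = (\<Sum>j<K. (cmod (u j))^2)"
      by (simp add: v_def)
    also have "G N * \<dots> \<le> G N * (l2norm u)^2"
      by (rule mult_left_mono[OF l2_partial_le[OF u] G_nonneg])
    finally show ?thesis .
  qed
  then have "(\<Sum>k. (cmod (Ralpha \<alpha> u k))^2) \<le> G N * (l2norm u)^2"
    using Tl2[OF u] by (intro suminf_le_const) (auto simp: l2_def)
  then show ?thesis using l2norm_sq[OF Tl2[OF u]] by simp
qed

end


lemma var_id:
  fixes w :: "nat \<Rightarrow> real" and x :: "nat \<Rightarrow> complex"
  shows "(\<Sum>k\<in>J. \<Sum>m\<in>J. w k * w m * (cmod (x k - x m))^2)
     = 2 * (\<Sum>k\<in>J. w k) * (\<Sum>k\<in>J. w k * (cmod (x k))^2) - 2 * (cmod (\<Sum>k\<in>J. of_real (w k) * x k))^2"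
proof -
  define W where "W k = complex_of_real (w k)" for k
  have n2: "complex_of_real ((cmod z)^2) = z * cnj z" for z by (rule complex_norm_square)
  have cA: "cnj (\<Sum>k\<in>J. W k * x k) = (\<Sum>k\<in>J. W k * cnj (x k))"
    by (simp add: W_def)
  have "complex_of_real (\<Sum>k\<in>J. \<Sum>m\<in>J. w k * w m * (cmod (x k - x m))^2)
     = (\<Sum>k\<in>J. \<Sum>m\<in>J. W k * W m * ((x k - x m) * cnj (x k - x m)))"
    unfolding of_real_sum by (intro sum.cong refl) (simp only: of_real_mult n2 W_def)
  also have "\<dots> = (\<Sum>k\<in>J. \<Sum>m\<in>J. W k * W m * (x k * cnj (x k)))
      + (\<Sum>k\<in>J. \<Sum>m\<in>J. W k * W m * (x m * cnj (x m)))
      - (\<Sum>k\<in>J. \<Sum>m\<in>J. (W k * x k) * (W m * cnj (x m)))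
      - (\<Sum>k\<in>J. \<Sum>m\<in>J. (W m * x m) * (W k * cnj (x k)))"
    by (simp add: sum.distrib sum_subtractf algebra_simps)
  also have "(\<Sum>k\<in>J. \<Sum>m\<in>J. W k * W m * (x k * cnj (x k))) = (\<Sum>m\<in>J. W m) * (\<Sum>k\<in>J. W k * (x k * cnj (x k)))"
    by (simp add: sum_distrib_left sum_distrib_right mult_ac)
  also have "(\<Sum>k\<in>J. \<Sum>m\<in>J. W k * W m * (x m * cnj (x m))) = (\<Sum>m\<in>J. W m) * (\<Sum>k\<in>J. W k * (x k * cnj (x k)))"
    by (subst sum.swap) (simp add: sum_distrib_left sum_distrib_right mult_ac)
  also have "(\<Sum>k\<in>J. \<Sum>m\<in>J. (W k * x k) * (W m * cnj (x m))) = (\<Sum>k\<in>J. W k * x k) * cnj (\<Sum>k\<in>J. W k * x k)"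
    unfolding cA by (simp add: sum_product)
  also have "(\<Sum>k\<in>J. \<Sum>m\<in>J. (W m * x m) * (W k * cnj (x k))) = (\<Sum>k\<in>J. W k * x k) * cnj (\<Sum>k\<in>J. W k * x k)"
    unfolding cA by (subst sum.swap) (simp add: sum_product)
  finally have "complex_of_real (\<Sum>k\<in>J. \<Sum>m\<in>J. w k * w m * (cmod (x k - x m))^2)
     = 2 * (\<Sum>m\<in>J. W m) * (\<Sum>k\<in>J. W k * (x k * cnj (x k))) - 2 * ((\<Sum>k\<in>J. W k * x k) * cnj (\<Sum>k\<in>J. W k * x k))"
    by simp
  also have "\<dots> = complex_of_real (2 * (\<Sum>k\<in>J. w k) * (\<Sum>k\<in>J. w k * (cmod (x k))^2) - 2 * (cmod (\<Sum>k\<in>J. of_real (w k) * x k))^2)"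
  proof -
    have e1: "complex_of_real ((cmod (\<Sum>k\<in>J. of_real (w k) * x k))^2) = (\<Sum>k\<in>J. W k * x k) * cnj (\<Sum>k\<in>J. W k * x k)"
      by (simp only: n2 W_def)
    have e2: "complex_of_real (\<Sum>k\<in>J. w k * (cmod (x k))^2) = (\<Sum>k\<in>J. W k * (x k * cnj (x k)))"
      by (simp only: of_real_sum of_real_mult n2 W_def)
    have e3: "complex_of_real (\<Sum>k\<in>J. w k) = (\<Sum>m\<in>J. W m)" by (simp add: W_def)
    show ?thesis by (simp only: of_real_diff of_real_mult of_real_numeral e1 e2 e3)
  qed
  finally show ?thesis by (simp only: of_real_eq_iff)
qed

lemma cs_w:
  fixes w :: "nat \<Rightarrow> real" and x :: "nat \<Rightarrow> complex"
  assumes "\<And>k. k \<in> J \<Longrightarrow> 0 \<le> w k"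
  shows "(cmod (\<Sum>k\<in>J. of_real (w k) * x k))^2 \<le> (\<Sum>k\<in>J. w k) * (\<Sum>k\<in>J. w k * (cmod (x k))^2)"
proof -
  have "0 \<le> (\<Sum>k\<in>J. \<Sum>m\<in>J. w k * w m * (cmod (x k - x m))^2)"
    using assms by (intro sum_nonneg) auto
  then show ?thesis unfolding var_id by simp
qed

lemma lI_eq:
  "lI \<alpha> a b f = 2 * mu \<alpha> a b * (\<Sum>k\<in>{a..b}. ww \<alpha> k * (cmod (\<Sum>j\<in>{Suc a..<Suc k}. f j))^2)
     - 2 * (cmod (\<Sum>k\<in>{a..b}. of_real (ww \<alpha> k) * (\<Sum>j\<in>{Suc a..<Suc k}. f j)))^2"
proof -
  define P where "P k = (\<Sum>j\<in>{Suc a..<Suc k}. f j)" for k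
  have D: "(\<Sum>j\<in>{min k m + 1..max k m}. f j) = P (max k m) - P (min k m)"
    if "k \<in> {a..b}" "m \<in> {a..b}" for k m
  proof -
    have "{min k m + 1..max k m} = {Suc (min k m)..<Suc (max k m)}" by auto
    moreover have "sum f {Suc a..<Suc (max k m)} - sum f {Suc a..<Suc (min k m)} = sum f {Suc (min k m)..<Suc (max k m)}"
      using that by (intro sum_diff_nat_ivl) auto
    ultimately show ?thesis by (simp add: P_def)
  qed
  have T: "(cmod (\<alpha> k * \<alpha> m * (\<Sum>j\<in>{min k m + 1..max k m}. f j)))^2 = ww \<alpha> k * ww \<alpha> m * (cmod (P k - P m))^2"
    if "k \<in> {a..b}" "m \<in> {a..b}" for k m
  proof -
    have "cmod (P (max k m) - P (min k m)) = cmod (P k - P m)"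
      by (cases "k \<le> m") (auto simp: max_def min_def norm_minus_commute)
    then show ?thesis using D[OF that] by (simp add: ww_def norm_mult power_mult_distrib)
  qed
  have "lI \<alpha> a b f = (\<Sum>k\<in>{a..b}. \<Sum>m\<in>{a..b} - {k}. ww \<alpha> k * ww \<alpha> m * (cmod (P k - P m))^2)"
    unfolding lI_def by (intro sum.cong refl) (use T in auto)
  also have "\<dots> = (\<Sum>k\<in>{a..b}. \<Sum>m\<in>{a..b}. ww \<alpha> k * ww \<alpha> m * (cmod (P k - P m))^2)"
  proof (rule sum.cong[OF refl])
    fix k assume k: "k \<in> {a..b}"
    show "(\<Sum>m\<in>{a..b} - {k}. ww \<alpha> k * ww \<alpha> m * (cmod (P k - P m))^2) = (\<Sum>m\<in>{a..b}. ww \<alpha> k * ww \<alpha> m * (cmod (P k - P m))^2)"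
      using sum.remove[of "{a..b}" k "\<lambda>m. ww \<alpha> k * ww \<alpha> m * (cmod (P k - P m))^2"] k by simp
  qed
  also have "\<dots> = 2 * mu \<alpha> a b * (\<Sum>k\<in>{a..b}. ww \<alpha> k * (cmod (P k))^2) - 2 * (cmod (\<Sum>k\<in>{a..b}. of_real (ww \<alpha> k) * P k))^2"
    unfolding var_id by (simp add: mu_def ww_def)
  finally show ?thesis by (simp add: P_def)
qed

lemma lI_zero: "lI \<alpha> a b (\<lambda>j. 0) = 0"
  by (simp add: lI_def)

context RS begin

definition LIset :: "nat \<Rightarrow> nat \<Rightarrow> real set" where
  "LIset n b = {lI \<alpha> n b f / mu \<alpha> n b | f.
          (\<forall>k. k \<notin> {n..b} \<longrightarrow> f k = 0) \<and> (\<Sum>k\<in>{n..b}. (cmod (f k))^2) \<le> 1}"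

lemma LI_eq: "LI \<alpha> n b = (if mu \<alpha> n b = 0 then 0 else sqrt (Sup (LIset n b)))"
  by (simp add: LI_def LIset_def)

lemma mu_nonneg: "0 \<le> mu \<alpha> n b" by (simp add: mu_def sum_nonneg)

lemma LIset_zero: "0 \<in> LIset n b"
proof -
  have "0 = lI \<alpha> n b (\<lambda>j. 0) / mu \<alpha> n b" by (simp add: lI_zero)
  then show ?thesis unfolding LIset_def by force
qed

lemma LIset_ne: "LIset n b \<noteq> {}" using LIset_zero by blast

lemma LIset_le: assumes "x \<in> LIset n b" shows "x \<le> 2 * G (Suc n)"
proof -
  obtain f where x: "x = lI \<alpha> n b f / mu \<alpha> n b" and supp: "\<forall>k. k \<notin> {n..b} \<longrightarrow> f k = 0"
    and nb: "(\<Sum>k\<in>{n..b}. (cmod (f k))^2) \<le> 1"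
    using assms unfolding LIset_def by blast
  show ?thesis
  proof (cases "mu \<alpha> n b = 0")
    case True then show ?thesis using G_nonneg by (simp add: x)
  next
    case False
    then have mu0: "0 < mu \<alpha> n b" using mu_nonneg by (simp add: order_le_neq_trans)
    define P where "P k = (\<Sum>j\<in>{Suc n..<Suc k}. f j)" for k
    define A where "A = (\<Sum>k\<in>{n..b}. ww \<alpha> k * (cmod (P k))^2)"
    have "lI \<alpha> n b f \<le> 2 * mu \<alpha> n b * A"
      unfolding lI_eq A_def P_def by simp
    then have x2: "x \<le> 2 * A" using mu0 unfolding x by (simp add: divide_le_eq mult_ac)
    define g where "g j = (if j \<in> {Suc n..b} then f j else 0)" for j
    have gs: "\<forall>j. g j \<noteq> 0 \<longrightarrow> Suc n \<le> j \<and> j < Suc b" by (auto simp: g_def)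
    have "(\<Sum>j<Suc b. (cmod (g j))^2) = (\<Sum>j\<in>{..<Suc b} \<inter> {Suc n..b}. (cmod (f j))^2)"
      by (subst sum.inter_restrict) (auto simp: g_def intro!: sum.cong)
    also have "{..<Suc b} \<inter> {Suc n..b} = {Suc n..b}" by auto
    also have "(\<Sum>j\<in>{Suc n..b}. (cmod (f j))^2) \<le> (\<Sum>j\<in>{n..b}. (cmod (f j))^2)"
      by (intro sum_mono2) auto
    finally have gn: "(\<Sum>j<Suc b. (cmod (g j))^2) \<le> 1" using nb by simp
    have "(\<Sum>k<Suc b. ww \<alpha> k * (cmod (SS g k))^2) \<in> GS (Suc n)"
      unfolding GS_def using gs gn by blast
    then have v: "(\<Sum>k<Suc b. ww \<alpha> k * (cmod (SS g k))^2) \<le> G (Suc n)" by (rule G_upper)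
    have SSg: "SS g k = P k" if "k \<in> {n..b}" for k
      unfolding SS_def P_def
      by (rule sum.mono_neutral_cong_right) (use that in \<open>auto simp: g_def\<close>)
    have "A = (\<Sum>k\<in>{n..b}. ww \<alpha> k * (cmod (SS g k))^2)"
      unfolding A_def by (intro sum.cong refl) (simp add: SSg)
    also have "\<dots> \<le> (\<Sum>k<Suc b. ww \<alpha> k * (cmod (SS g k))^2)"
      by (intro sum_mono2) auto
    finally show ?thesis using x2 v by simp
  qed
qed

lemma LIset_bdd: "bdd_above (LIset n b)"
  using LIset_le by (intro bdd_aboveI) blast

lemma LI_nonneg: "0 \<le> LI \<alpha> n b"
proof -
  have "0 \<le> Sup (LIset n b)" by (rule cSup_upper[OF LIset_zero LIset_bdd])
  then show ?thesis by (simp add: LI_eq)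
qed

lemma LI_le: "LI \<alpha> n b \<le> sqrt (2 * G (Suc n))"
proof -
  have "Sup (LIset n b) \<le> 2 * G (Suc n)" by (rule cSup_least[OF LIset_ne LIset_le])
  then show ?thesis using G_nonneg by (simp add: LI_eq)
qed

lemma LI_sq: "mu \<alpha> n b \<noteq> 0 \<Longrightarrow> (LI \<alpha> n b)^2 = Sup (LIset n b)"
proof -
  have "0 \<le> Sup (LIset n b)" by (rule cSup_upper[OF LIset_zero LIset_bdd])
  then show "mu \<alpha> n b \<noteq> 0 \<Longrightarrow> (LI \<alpha> n b)^2 = Sup (LIset n b)" by (simp add: LI_eq)
qed

definition LTset :: "nat \<Rightarrow> real set" where "LTset n = {LI \<alpha> n b | b. n \<le> b}"

lemma Ltail_eq: "Ltail \<alpha> n = Sup (LTset n)"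
  by (simp add: Ltail_def LTset_def)

lemma LTset_ne: "LTset n \<noteq> {}" unfolding LTset_def by blast

lemma LTset_bdd: "bdd_above (LTset n)"
  unfolding LTset_def using LI_le by (intro bdd_aboveI) blast

lemma Ltail_le: "Ltail \<alpha> n \<le> sqrt (2 * G (Suc n))"
  unfolding Ltail_eq by (rule cSup_least[OF LTset_ne]) (use LI_le in \<open>auto simp: LTset_def\<close>)

lemma LI_le_Ltail: "n \<le> b \<Longrightarrow> LI \<alpha> n b \<le> Ltail \<alpha> n"
  unfolding Ltail_eq by (rule cSup_upper[OF _ LTset_bdd]) (auto simp: LTset_def)

end


lemma SS_zero_below: "\<forall>j. f j \<noteq> 0 \<longrightarrow> m \<le> j \<Longrightarrow> k < m \<Longrightarrow> SS f k = 0"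
  unfolding SS_def by (rule sum.neutral) force

lemma SS_zero_above:
  assumes "\<forall>j. f j \<noteq> 0 \<longrightarrow> j < e" "(\<Sum>j<e. f j) = 0" "e \<le> k"
  shows "SS f k = 0"
proof -
  have "SS f k = (\<Sum>j<e. f j)" unfolding SS_def
    by (rule sum.mono_neutral_right) (use assms in force)+
  then show ?thesis using assms by simp
qed

context RS begin

lemma G_zero_if: assumes "\<forall>j\<ge>n. \<alpha> j = 0" shows "G n = 0"
proof -
  have "x \<le> 0" if xin: "x \<in> GS n" for x
  proof -
    obtain f K where x: "x = (\<Sum>k<K. ww \<alpha> k * (cmod (SS f k))^2)"
      and supp: "\<forall>j. f j \<noteq> 0 \<longrightarrow> n \<le> j \<and> j < K"
      using xin unfolding GS_def by blast
    have "ww \<alpha> k * (cmod (SS f k))^2 = 0" for k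
    proof (cases "k < n")
      case True
      then have "SS f k = 0" using supp by (intro SS_zero_below[of f n]) auto
      then show ?thesis by simp
    next
      case False then show ?thesis using assms by (simp add: ww_def)
    qed
    note z = this
    have "x = 0" unfolding x by (rule sum.neutral) (use z in blast)
    then show ?thesis by simp
  qed
  then have "G n \<le> 0" unfolding G_def by (intro cSup_least[OF GS_ne])
  then show ?thesis using G_nonneg[of n] by simp
qed

lemma LI_lower:
  assumes G0: "0 < Gam" and d: "0 < \<delta>"
  shows "\<exists>b\<ge>n. 2 * Gam - \<delta> < (LI \<alpha> n b)^2"
proof -
  have "\<exists>j0\<ge>n. \<alpha> j0 \<noteq> 0"
  proof (rule ccontr)
    assume "\<not> ?thesis"
    then have "G n = 0" by (intro G_zero_if) auto
    then show False using Gam_le[of n] G0 by simp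
  qed
  then obtain j0 where j0: "n \<le> j0" "\<alpha> j0 \<noteq> 0" by blast
  define \<mu>0 where "\<mu>0 = ww \<alpha> j0"
  have \<mu>0: "0 < \<mu>0" using j0 by (simp add: \<mu>0_def ww_def)
  define \<eta> where "\<eta> = \<delta> / (4 * (1 + C^2))"
  have C1: "0 < 1 + C^2" by (simp add: add_pos_nonneg)
  have \<eta>: "0 < \<eta>" using d C1 by (simp add: \<eta>_def)
  have \<eta>b: "2 * \<eta> + 2 * \<eta> * C^2 < \<delta>"
  proof -
    have e: "\<eta> * (1 + C^2) = \<delta> / 4" using C1 unfolding \<eta>_def by (simp add: field_simps)
    have "2 * \<eta> + 2 * \<eta> * C^2 = 2 * (\<eta> * (1 + C^2))" by (simp add: algebra_simps)
    then have "2 * \<eta> + 2 * \<eta> * C^2 = \<delta> / 2" using e by simp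
    then show ?thesis using d by simp
  qed
  have \<eta>\<mu>: "0 < \<eta> * \<mu>0" using \<eta> \<mu>0 by simp
  obtain m0 where m0: "\<forall>m\<ge>m0. norm (\<Sum>i. ww \<alpha> (i + m)) < \<eta> * \<mu>0"
    using suminf_exist_split[OF \<eta>\<mu> ww_summable] by blast
  define m where "m = max m0 (Suc j0)"
  have mj: "j0 < m" "n < m" using j0 by (auto simp: m_def)
  have tailnn: "0 \<le> (\<Sum>i. ww \<alpha> (i + m))"
    by (intro suminf_nonneg summable_ignore_initial_segment[OF ww_summable]) simp
  have tail: "(\<Sum>i. ww \<alpha> (i + m)) < \<eta> * \<mu>0"
    using m0[rule_format, of m] tailnn by (simp add: m_def)
  obtain x where x: "x \<in> GS m" "G m - \<eta> < x" using G_approx[OF \<eta>] by blast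
  then obtain f K where xdef: "x = (\<Sum>k<K. ww \<alpha> k * (cmod (SS f k))^2)"
    and supp: "\<forall>j. f j \<noteq> 0 \<longrightarrow> m \<le> j \<and> j < K" and nb: "(\<Sum>j<K. (cmod (f j))^2) \<le> 1"
    unfolding GS_def by blast
  define b where "b = K + j0"
  have nb': "n \<le> b" using j0 by (simp add: b_def)
  have mu_ge: "\<mu>0 \<le> mu \<alpha> n b"
    unfolding mu_def \<mu>0_def ww_def by (rule member_le_sum) (use j0 in \<open>auto simp: b_def\<close>)
  have mu0: "0 < mu \<alpha> n b" using mu_ge \<mu>0 by simp
  have fsupp: "\<forall>k. k \<notin> {n..b} \<longrightarrow> f k = 0" using supp mj by (force simp: b_def)
  have fnorm: "(\<Sum>k\<in>{n..b}. (cmod (f k))^2) \<le> 1"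
  proof -
    have "(\<Sum>k\<in>{n..b}. (cmod (f k))^2) = (\<Sum>k\<in>{m..<K}. (cmod (f k))^2)"
      by (rule sum.mono_neutral_right) (use supp mj in \<open>auto simp: b_def\<close>)
    also have "\<dots> = (\<Sum>k<K. (cmod (f k))^2)"
      by (rule sum.mono_neutral_left) (use supp in auto)
    finally show ?thesis using nb by simp
  qed
  have PS: "(\<Sum>j\<in>{Suc n..<Suc k}. f j) = SS f k" for k
    unfolding SS_def
    by (rule sum.mono_neutral_left) (use supp mj in \<open>auto simp: not_less_eq_eq\<close>)
  define A where "A = (\<Sum>k\<in>{n..b}. ww \<alpha> k * (cmod (SS f k))^2)"
  define B where "B = (\<Sum>k\<in>{n..b}. of_real (ww \<alpha> k) * SS f k)"
  have lIe: "lI \<alpha> n b f = 2 * mu \<alpha> n b * A - 2 * (cmod B)^2"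
    unfolding lI_eq A_def B_def PS ..
  have SS0: "k < m \<Longrightarrow> SS f k = 0" for k using supp by (intro SS_zero_below[of f m]) auto
  have Ax: "x \<le> A"
  proof -
    have "x = (\<Sum>k\<in>{m..<K}. ww \<alpha> k * (cmod (SS f k))^2)"
      unfolding xdef by (rule sum.mono_neutral_right) (auto simp: SS0)
    also have "\<dots> \<le> A" unfolding A_def
      by (rule sum_mono2) (use mj in \<open>auto simp: b_def\<close>)
    finally show ?thesis .
  qed
  have Bm: "B = (\<Sum>k\<in>{m..b}. of_real (ww \<alpha> k) * SS f k)"
    unfolding B_def by (rule sum.mono_neutral_right) (use mj in \<open>auto simp: SS0\<close>)
  have B2: "(cmod B)^2 \<le> (\<Sum>k\<in>{m..b}. ww \<alpha> k) * (\<Sum>k\<in>{m..b}. ww \<alpha> k * (cmod (SS f k))^2)"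
    unfolding Bm by (rule cs_w) simp
  have W1: "(\<Sum>k\<in>{m..b}. ww \<alpha> k) \<le> \<eta> * \<mu>0"
  proof (cases "m \<le> b")
    case True
    have "(\<Sum>k\<in>{m..b}. ww \<alpha> k) = (\<Sum>i\<in>{0..b-m}. ww \<alpha> (i + m))"
      using sum.shift_bounds_cl_nat_ivl[of "ww \<alpha>" 0 m "b - m"] True by simp
    also have "\<dots> = (\<Sum>i<Suc (b-m). ww \<alpha> (i + m))"
      by (simp add: atLeast0AtMost lessThan_Suc_atMost)
    also have "\<dots> \<le> (\<Sum>i. ww \<alpha> (i + m))"
      by (intro sum_le_suminf summable_ignore_initial_segment[OF ww_summable]) auto
    finally show ?thesis using tail by simp
  next
    case False then show ?thesis using \<eta>\<mu> by simp
  qed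
  have W2: "(\<Sum>k\<in>{m..b}. ww \<alpha> k * (cmod (SS f k))^2) \<le> C^2"
  proof -
    have "(\<Sum>k\<in>{m..b}. ww \<alpha> k * (cmod (SS f k))^2) \<le> (\<Sum>k<Suc b. ww \<alpha> k * (cmod (SS f k))^2)"
      by (rule sum_mono2) auto
    moreover have "(\<Sum>k<Suc b. ww \<alpha> k * (cmod (SS f k))^2) \<in> GS m"
    proof -
      have "(\<Sum>j<Suc b. (cmod (f j))^2) = (\<Sum>j<K. (cmod (f j))^2)"
        by (rule sum.mono_neutral_right) (use supp in \<open>auto simp: b_def\<close>)
      then have "(\<Sum>j<Suc b. (cmod (f j))^2) \<le> 1" using nb by simp
      moreover have "\<forall>j. f j \<noteq> 0 \<longrightarrow> m \<le> j \<and> j < Suc b" using supp by (force simp: b_def)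
      ultimately show ?thesis unfolding GS_def by blast
    qed
    ultimately show ?thesis using GS_elem_le by (meson order_trans)
  qed
  have B3: "(cmod B)^2 \<le> \<eta> * \<mu>0 * C^2"
  proof -
    have "(\<Sum>k\<in>{m..b}. ww \<alpha> k) * (\<Sum>k\<in>{m..b}. ww \<alpha> k * (cmod (SS f k))^2) \<le> (\<eta> * \<mu>0) * C^2"
      by (rule mult_mono[OF W1 W2]) (use \<eta>\<mu> in \<open>auto intro: sum_nonneg\<close>)
    then show ?thesis using B2 by simp
  qed
  have B4: "(cmod B)^2 / mu \<alpha> n b \<le> \<eta> * C^2"
  proof -
    have "\<eta> * C^2 * \<mu>0 \<le> \<eta> * C^2 * mu \<alpha> n b"
      using mu_ge \<eta> by (intro mult_left_mono) auto
    then have "\<eta> * \<mu>0 * C^2 \<le> \<eta> * C^2 * mu \<alpha> n b" by (simp add: mult_ac)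
    then have "(cmod B)^2 \<le> \<eta> * C^2 * mu \<alpha> n b" using B3 by simp
    then show ?thesis using mu0 by (simp add: divide_le_eq)
  qed
  have val: "lI \<alpha> n b f / mu \<alpha> n b = 2 * A - 2 * ((cmod B)^2 / mu \<alpha> n b)"
    using mu0 by (simp add: lIe field_simps)
  have "2 * Gam - \<delta> < lI \<alpha> n b f / mu \<alpha> n b"
    using val B4 Ax x(2) Gam_le[of m] \<eta>b by simp
  moreover have "lI \<alpha> n b f / mu \<alpha> n b \<in> LIset n b"
    unfolding LIset_def using fsupp fnorm by blast
  then have "lI \<alpha> n b f / mu \<alpha> n b \<le> Sup (LIset n b)" by (rule cSup_upper[OF _ LIset_bdd])
  ultimately have "2 * Gam - \<delta> < (LI \<alpha> n b)^2" using LI_sq mu0 by simp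
  then show ?thesis using nb' by blast
qed

lemma Ltail_ge: "sqrt (2 * Gam) \<le> Ltail \<alpha> n"
proof (cases "Gam = 0")
  case True then show ?thesis using LI_le_Ltail[of n n] LI_nonneg[of n n] by simp
next
  case False
  then have G0: "0 < Gam" using Gam_nonneg by simp
  show ?thesis
  proof (rule ccontr)
    assume "\<not> ?thesis"
    then have lt: "Ltail \<alpha> n < sqrt (2 * Gam)" by simp
    have t0: "0 \<le> Ltail \<alpha> n" using LI_le_Ltail[of n n] LI_nonneg[of n n] by simp
    have "(Ltail \<alpha> n)^2 < (sqrt (2 * Gam))^2"
      using lt t0 by (intro power_strict_mono) auto
    then have lt2: "(Ltail \<alpha> n)^2 < 2 * Gam" using G0 by simp
    obtain b where b: "n \<le> b" "2 * Gam - (2 * Gam - (Ltail \<alpha> n)^2) < (LI \<alpha> n b)^2"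
      using LI_lower[OF G0, of "2 * Gam - (Ltail \<alpha> n)^2" n] lt2 by auto
    then have "(Ltail \<alpha> n)^2 < (LI \<alpha> n b)^2" by simp
    moreover have "(LI \<alpha> n b)^2 \<le> (Ltail \<alpha> n)^2"
      using LI_le_Ltail[OF b(1)] LI_nonneg[of n b] by (simp add: power_mono)
    ultimately show False by simp
  qed
qed

lemma Ltail_lim: "(\<lambda>n. Ltail \<alpha> n) \<longlonglongrightarrow> sqrt (2 * Gam)"
proof (rule tendsto_sandwich[of "\<lambda>n. sqrt (2 * Gam)" _ sequentially "\<lambda>n. sqrt (2 * G (Suc n))"])
  show "\<forall>\<^sub>F n in sequentially. sqrt (2 * Gam) \<le> Ltail \<alpha> n" using Ltail_ge by simp
  show "\<forall>\<^sub>F n in sequentially. Ltail \<alpha> n \<le> sqrt (2 * G (Suc n))" using Ltail_le by simp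
  show "(\<lambda>n. sqrt (2 * Gam)) \<longlonglongrightarrow> sqrt (2 * Gam)" by simp
  have "(\<lambda>n. G (Suc n)) \<longlonglongrightarrow> Gam" using G_lim by (rule LIMSEQ_Suc)
  then show "(\<lambda>n. sqrt (2 * G (Suc n))) \<longlonglongrightarrow> sqrt (2 * Gam)" by (intro tendsto_intros)
qed

end


lemma Ralpha_add: "Ralpha \<alpha> (\<lambda>k. f k + g k) = (\<lambda>k. Ralpha \<alpha> f k + Ralpha \<alpha> g k)"
  by (simp add: Ralpha_def sum.distrib distrib_left fun_eq_iff)

lemma Ralpha_scale: "Ralpha \<alpha> (\<lambda>k. c * f k) = (\<lambda>k. c * Ralpha \<alpha> f k)"
  by (simp add: Ralpha_def sum_distrib_left fun_eq_iff mult_ac)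

lemma Ralpha_diff: "Ralpha \<alpha> (\<lambda>k. f k - g k) = (\<lambda>k. Ralpha \<alpha> f k - Ralpha \<alpha> g k)"
  by (simp add: Ralpha_def sum_subtractf right_diff_distrib fun_eq_iff)

lemma l2norm_neg: "l2norm (\<lambda>k. - f k) = l2norm f"
  by (simp add: l2norm_def)

lemma l2norm_triangle_diff:
  assumes "l2 f" "l2 g"
  shows "l2norm (\<lambda>k. f k - g k) \<le> l2norm f + l2norm g"
proof -
  have "l2 (\<lambda>k. - g k)" using l2_scale[OF assms(2), of "-1"] by simp
  then have "l2norm (\<lambda>k. f k + - g k) \<le> l2norm f + l2norm (\<lambda>k. - g k)"
    using l2norm_triangle[OF assms(1)] by blast
  then show ?thesis by (simp add: l2norm_neg)
qed

lemma l2norm_le_of_sq: "l2 f \<Longrightarrow> (l2norm f)^2 \<le> y \<Longrightarrow> l2norm f \<le> sqrt y"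
  using real_le_rsqrt by blast

definition trunc :: "nat \<Rightarrow> (nat \<Rightarrow> complex) \<Rightarrow> nat \<Rightarrow> complex" where
  "trunc N f = (\<lambda>j. if j < N then f j else 0)"

lemma trunc_l2: "l2 (trunc N f)" and trunc_norm2: "(l2norm (trunc N f))^2 = (\<Sum>j<N. (cmod (f j))^2)"
proof -
  have z: "\<And>j. N \<le> j \<Longrightarrow> trunc N f j = 0" by (simp add: trunc_def)
  show "l2 (trunc N f)" by (rule l2_finite(1)[of N, OF z])
  have "(l2norm (trunc N f))^2 = (\<Sum>j<N. (cmod (trunc N f j))^2)" by (rule l2_finite(2)[of N, OF z])
  then show "(l2norm (trunc N f))^2 = (\<Sum>j<N. (cmod (f j))^2)" by (simp add: trunc_def)
qed

lemma trunc_norm_le: "l2 f \<Longrightarrow> l2norm (trunc N f) \<le> l2norm f"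
proof -
  assume f: "l2 f"
  have "(l2norm (trunc N f))^2 \<le> (l2norm f)^2" using trunc_norm2 l2_partial_le[OF f] by simp
  then show ?thesis using f trunc_l2 by (simp add: power2_le_iff_abs_le)
qed

context RS begin

definition PN :: "nat \<Rightarrow> (nat \<Rightarrow> complex) \<Rightarrow> nat \<Rightarrow> complex" where
  "PN N f = Ralpha \<alpha> (trunc N f)"

lemma PN_finite_rank: "finite_rank (PN N)"
proof -
  have lin: "linear_op (PN N)"
    unfolding linear_op_def PN_def
  proof (intro conjI allI impI)
    fix f g :: "nat \<Rightarrow> complex"
    have "trunc N (\<lambda>k. f k + g k) = (\<lambda>k. trunc N f k + trunc N g k)" by (simp add: trunc_def fun_eq_iff)
    then show "Ralpha \<alpha> (trunc N (\<lambda>k. f k + g k)) = (\<lambda>k. Ralpha \<alpha> (trunc N f) k + Ralpha \<alpha> (trunc N g) k)"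
      by (simp add: Ralpha_add)
  next
    fix c and f :: "nat \<Rightarrow> complex"
    have "trunc N (\<lambda>k. c * f k) = (\<lambda>k. c * trunc N f k)" by (simp add: trunc_def fun_eq_iff)
    then show "Ralpha \<alpha> (trunc N (\<lambda>k. c * f k)) = (\<lambda>k. c * Ralpha \<alpha> (trunc N f) k)"
      by (simp add: Ralpha_scale)
  qed
  have bnd: "bounded_op (PN N)"
    unfolding bounded_op_def PN_def
  proof (intro conjI allI impI exI)
    fix f assume "l2 f"
    show "l2 (Ralpha \<alpha> (trunc N f))" by (rule Tl2[OF trunc_l2])
  next
    fix f assume f: "l2 f"
    have "l2norm (Ralpha \<alpha> (trunc N f)) \<le> C * l2norm (trunc N f)" by (rule Tb[OF trunc_l2])
    also have "\<dots> \<le> C * l2norm f" using trunc_norm_le[OF f] Cnn by (rule mult_left_mono)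
    finally show "l2norm (Ralpha \<alpha> (trunc N f)) \<le> C * l2norm f" .
  qed
  define v where "v i k = \<alpha> k * (if i \<le> k then 1 else 0)" for i k
  have vl2: "l2 (v i)" for i
  proof -
    have "summable (\<lambda>k. (cmod (v i k))^2)"
      using ww_summable by (rule summable_comparison_test'[where N=0]) (simp add: v_def ww_def)
    then show ?thesis by (simp add: l2_def)
  qed
  have rep: "PN N f = (\<lambda>k. \<Sum>i<N. f i * v i k)" for f
  proof
    fix k
    have "(\<Sum>j\<le>k. trunc N f j) = (\<Sum>j\<in>{..k} \<inter> {..<N}. f j)"
      by (simp add: trunc_def sum.inter_restrict)
    also have "\<dots> = (\<Sum>i<N. if i \<le> k then f i else 0)"
      using sum.inter_restrict[of "{..<N}" f "{..k}"] by (simp add: Int_commute)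
    finally have e: "(\<Sum>j\<le>k. trunc N f j) = (\<Sum>i<N. if i \<le> k then f i else 0)" .
    have "PN N f k = \<alpha> k * (\<Sum>i<N. if i \<le> k then f i else 0)"
      by (simp only: PN_def Ralpha_def e)
    also have "\<dots> = (\<Sum>i<N. f i * v i k)"
      unfolding sum_distrib_left by (intro sum.cong refl) (simp add: v_def)
    finally show "PN N f k = (\<Sum>i<N. f i * v i k)" .
  qed
  show ?thesis unfolding finite_rank_def
    using lin bnd vl2 rep by blast
qed

definition OPS :: "((nat \<Rightarrow> complex) \<Rightarrow> (nat \<Rightarrow> complex)) \<Rightarrow> real set" where
  "OPS P = {l2norm ((\<lambda>f k. Ralpha \<alpha> f k - P f k) f) | f. l2 f \<and> l2norm f \<le> 1}"

lemma opnorm_eq: "opnorm (\<lambda>f k. Ralpha \<alpha> f k - P f k) = Sup (OPS P)"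
  by (simp add: opnorm_def OPS_def)

lemma OPS_bdd: assumes "bounded_op P" shows "bdd_above (OPS P)"
proof -
  obtain CP where CP: "\<forall>f. l2 f \<longrightarrow> l2norm (P f) \<le> CP * l2norm f"
    and Pl2: "\<forall>f. l2 f \<longrightarrow> l2 (P f)"
    using assms unfolding bounded_op_def by blast
  have "x \<le> C + max CP 0" if xin: "x \<in> OPS P" for x
  proof -
    obtain f where x: "x = l2norm (\<lambda>k. Ralpha \<alpha> f k - P f k)" and f: "l2 f" "l2norm f \<le> 1"
      using xin unfolding OPS_def by blast
    have "x \<le> l2norm (Ralpha \<alpha> f) + l2norm (P f)"
      unfolding x by (rule l2norm_triangle_diff[OF Tl2[OF f(1)]]) (use Pl2 f in blast)
    moreover have "l2norm (Ralpha \<alpha> f) \<le> C"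
    proof -
      have "C * l2norm f \<le> C" using f Cnn by (simp add: mult_left_le)
      then show ?thesis using Tb[OF f(1)] by linarith
    qed
    moreover have "l2norm (P f) \<le> max CP 0"
    proof -
      have "l2norm (P f) \<le> CP * l2norm f" using CP f by blast
      also have "\<dots> \<le> max CP 0 * l2norm f" using f by (intro mult_right_mono) auto
      also have "\<dots> \<le> max CP 0" using f by (intro mult_left_le) auto
      finally show ?thesis .
    qed
    ultimately show ?thesis by simp
  qed
  then show ?thesis by (intro bdd_aboveI) blast
qed

lemma OPS_upper:
  assumes "bounded_op P" "l2 f" "l2norm f \<le> 1"
  shows "l2norm (\<lambda>k. Ralpha \<alpha> f k - P f k) \<le> opnorm (\<lambda>f k. Ralpha \<alpha> f k - P f k)"
  unfolding opnorm_eq by (rule cSup_upper[OF _ OPS_bdd[OF assms(1)]]) (use assms in \<open>auto simp: OPS_def\<close>)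

lemma opnorm_nonneg:
  assumes "bounded_op P"
  shows "0 \<le> opnorm (\<lambda>f k. Ralpha \<alpha> f k - P f k)"
proof -
  have z: "l2 (\<lambda>k. 0::complex)" "l2norm (\<lambda>k. 0::complex) \<le> 1" by (simp_all add: l2norm_def)
  have "l2 (P (\<lambda>k. 0))" using assms z unfolding bounded_op_def by blast
  then have "l2 (\<lambda>k. Ralpha \<alpha> (\<lambda>k. 0) k - P (\<lambda>k. 0) k)" using Tl2[OF z(1)] by (intro l2_diff)
  then have "0 \<le> l2norm (\<lambda>k. Ralpha \<alpha> (\<lambda>k. 0) k - P (\<lambda>k. 0) k)" by simp
  also have "\<dots> \<le> opnorm (\<lambda>f k. Ralpha \<alpha> f k - P f k)" by (rule OPS_upper[OF assms z])
  finally show ?thesis .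
qed

lemma opnorm_PN: "opnorm (\<lambda>f k. Ralpha \<alpha> f k - PN N f k) \<le> sqrt (G N)"
  unfolding opnorm_eq
proof (rule cSup_least)
  have "l2 (\<lambda>k. 0::complex) \<and> l2norm (\<lambda>k. 0::complex) \<le> 1" by (simp add: l2norm_def)
  then show "OPS (PN N) \<noteq> {}" unfolding OPS_def by blast
next
  fix x assume "x \<in> OPS (PN N)"
  then obtain f where x: "x = l2norm (\<lambda>k. Ralpha \<alpha> f k - PN N f k)" and f: "l2 f" "l2norm f \<le> 1"
    unfolding OPS_def by blast
  define u where "u j = (if j < N then 0 else f j)" for j
  have fu: "(\<lambda>j. f j - trunc N f j) = u" by (simp add: u_def trunc_def fun_eq_iff)
  have ul2: "l2 u" using l2_diff[OF f(1) trunc_l2[of N f]] fu by simp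
  have eq: "(\<lambda>k. Ralpha \<alpha> f k - PN N f k) = Ralpha \<alpha> u"
    unfolding PN_def fu[symmetric] Ralpha_diff ..
  have "(l2norm u)^2 \<le> (l2norm f)^2"
  proof -
    have "summable (\<lambda>k. (cmod (u k))^2)" using ul2 by (simp add: l2_def)
    moreover have "(\<Sum>k. (cmod (u k))^2) \<le> (\<Sum>k. (cmod (f k))^2)"
      using ul2 f(1) by (intro suminf_le) (auto simp: l2_def u_def)
    ultimately show ?thesis using l2norm_sq[OF ul2] l2norm_sq[OF f(1)] by simp
  qed
  also have "\<dots> \<le> 1" using f by (simp add: power_le_one)
  finally have u1: "(l2norm u)^2 \<le> 1" .
  have "(l2norm (Ralpha \<alpha> u))^2 \<le> G N * (l2norm u)^2"
    by (rule tail_le[OF ul2]) (simp add: u_def)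
  also have "\<dots> \<le> G N" using u1 G_nonneg by (simp add: mult_left_le)
  finally show "x \<le> sqrt (G N)" unfolding x eq by (rule real_le_rsqrt)
qed

end


lemma lin_dep:
  fixes c :: "nat \<Rightarrow> nat \<Rightarrow> complex"
  shows "finite A \<Longrightarrow> N < card A \<Longrightarrow> \<exists>d. (\<exists>i\<in>A. d i \<noteq> 0) \<and> (\<forall>l<N. (\<Sum>i\<in>A. d i * c i l) = 0)"
proof (induction N arbitrary: A c)
  case 0
  then have "A \<noteq> {}" by auto
  then obtain i where "i \<in> A" by blast
  then show ?case by (intro exI[of _ "\<lambda>_. 1"]) auto
next
  case (Suc N)
  show ?case
  proof (cases "\<exists>p\<in>A. c p N \<noteq> 0")
    case False
    obtain d where d: "\<exists>i\<in>A. d i \<noteq> 0" "\<forall>l<N. (\<Sum>i\<in>A. d i * c i l) = 0"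
      using Suc.IH[of A c] Suc.prems by auto
    have "\<forall>l<Suc N. (\<Sum>i\<in>A. d i * c i l) = 0"
    proof (intro allI impI)
      fix l assume "l < Suc N"
      then consider "l < N" | "l = N" by linarith
      then show "(\<Sum>i\<in>A. d i * c i l) = 0"
      proof cases
        case 1 then show ?thesis using d by blast
      next
        case 2 then show ?thesis using False by (intro sum.neutral) auto
      qed
    qed
    then show ?thesis using d(1) by (intro exI[of _ d] conjI)
  next
    case True
    then obtain p where p: "p \<in> A" "c p N \<noteq> 0" by blast
    define c' where "c' i l = c i l - (c i N / c p N) * c p l" for i l
    have cardA': "N < card (A - {p})" using Suc.prems p by (simp add: card_Diff_singleton)
    obtain d' where d': "\<exists>i\<in>A - {p}. d' i \<noteq> 0" "\<forall>l<N. (\<Sum>i\<in>A - {p}. d' i * c' i l) = 0"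
      using Suc.IH[of "A - {p}" c'] Suc.prems(1) cardA' by auto
    define S where "S = (\<Sum>i\<in>A - {p}. d' i * c i N)"
    define d where "d i = (if i = p then - S / c p N else d' i)" for i
    have key: "(\<Sum>i\<in>A. d i * c i l) = (\<Sum>i\<in>A - {p}. d' i * c' i l)" for l
    proof -
      have e1: "(\<Sum>i\<in>A. d i * c i l) = d p * c p l + (\<Sum>i\<in>A - {p}. d i * c i l)"
        using sum.remove[OF Suc.prems(1) p(1)] by blast
      have e1': "(\<Sum>i\<in>A - {p}. d i * c i l) = (\<Sum>i\<in>A - {p}. d' i * c i l)"
        by (rule sum.cong) (auto simp: d_def)
      have e2: "(\<Sum>i\<in>A - {p}. d' i * c' i l) = (\<Sum>i\<in>A - {p}. d' i * c i l) - S / c p N * c p l"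
      proof -
        have "(\<Sum>i\<in>A - {p}. d' i * c' i l) = (\<Sum>i\<in>A - {p}. d' i * c i l - (d' i * c i N) * (c p l / c p N))"
          by (rule sum.cong) (auto simp: c'_def algebra_simps)
        also have "\<dots> = (\<Sum>i\<in>A - {p}. d' i * c i l) - S * (c p l / c p N)"
          by (simp add: sum_subtractf sum_distrib_right S_def sum_divide_distrib)
        finally show ?thesis by simp
      qed
      show ?thesis using e1 e1' e2 by (simp add: d_def)
    qed
    have "\<forall>l<Suc N. (\<Sum>i\<in>A. d i * c i l) = 0"
    proof (intro allI impI)
      fix l assume "l < Suc N"
      then consider "l < N" | "l = N" by linarith
      then show "(\<Sum>i\<in>A. d i * c i l) = 0"
      proof cases
        case 1 then show ?thesis using d' key by simp
      next
        case 2
        have "c' i N = 0" for i using p(2) by (simp add: c'_def)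
        then show ?thesis using key 2 by simp
      qed
    qed
    moreover have "\<exists>i\<in>A. d i \<noteq> 0" using d'(1) by (auto simp: d_def)
    ultimately show ?thesis by (intro exI[of _ d] conjI)
  qed
qed

lemma one_nz_sq:
  fixes x :: "nat \<Rightarrow> complex"
  assumes "finite A" "\<And>i i'. i \<in> A \<Longrightarrow> i' \<in> A \<Longrightarrow> x i \<noteq> 0 \<Longrightarrow> x i' \<noteq> 0 \<Longrightarrow> i = i'"
  shows "(cmod (\<Sum>i\<in>A. x i))^2 = (\<Sum>i\<in>A. (cmod (x i))^2)"
proof (cases "\<exists>i0\<in>A. x i0 \<noteq> 0")
  case True
  then obtain i0 where i0: "i0 \<in> A" "x i0 \<noteq> 0" by blast
  have z: "\<forall>i\<in>A - {i0}. x i = 0"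
  proof
    fix i assume i: "i \<in> A - {i0}"
    show "x i = 0"
    proof (rule ccontr)
      assume "x i \<noteq> 0"
      then have "i = i0" using assms(2)[of i i0] i i0 by blast
      then show False using i by blast
    qed
  qed
  have a: "(\<Sum>i\<in>A - {i0}. x i) = 0" using z by (intro sum.neutral) auto
  have b: "(\<Sum>i\<in>A - {i0}. (cmod (x i))^2) = 0" using z by (intro sum.neutral) auto
  have "(\<Sum>i\<in>A. x i) = x i0" using sum.remove[OF assms(1) i0(1), of x] a by simp
  moreover have "(\<Sum>i\<in>A. (cmod (x i))^2) = (cmod (x i0))^2"
    using sum.remove[OF assms(1) i0(1), of "\<lambda>i. (cmod (x i))^2"] b by simp
  ultimately show ?thesis by simp
next
  case False then show ?thesis by simp
qed

lemma linop_add: "linear_op P \<Longrightarrow> l2 f \<Longrightarrow> l2 g \<Longrightarrow> P (\<lambda>k. f k + g k) = (\<lambda>k. P f k + P g k)"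
  unfolding linear_op_def by simp

lemma linop_scale: "linear_op P \<Longrightarrow> l2 f \<Longrightarrow> P (\<lambda>k. c * f k) = (\<lambda>k. c * P f k)"
  unfolding linear_op_def by simp

lemma linop_sum:
  assumes lin: "linear_op P" and fin: "finite A" and l2g: "\<And>i. i \<in> A \<Longrightarrow> l2 (g i)"
  shows "P (\<lambda>k. \<Sum>i\<in>A. d i * g i k) = (\<lambda>k. \<Sum>i\<in>A. d i * P (g i) k)"
  using fin l2g
proof (induction A rule: finite_induct)
  case empty
  have "P (\<lambda>k. 0 * (\<lambda>k. 0) k) = (\<lambda>k. 0 * P (\<lambda>k. 0) k)"
    by (rule linop_scale[OF lin l2_zero])
  then show ?case by simp
next
  case (insert x F)
  have l2x: "l2 (\<lambda>k. d x * g x k)" using insert by (intro l2_scale) auto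
  have l2F: "l2 (\<lambda>k. \<Sum>i\<in>F. d i * g i k)" using insert by (intro l2_sum) auto
  have "P (\<lambda>k. \<Sum>i\<in>insert x F. d i * g i k) = P (\<lambda>k. d x * g x k + (\<Sum>i\<in>F. d i * g i k))"
    using insert(1,2) by simp
  also have "\<dots> = (\<lambda>k. P (\<lambda>k. d x * g x k) k + P (\<lambda>k. \<Sum>i\<in>F. d i * g i k) k)"
    by (rule linop_add[OF lin l2x l2F])
  also have "P (\<lambda>k. d x * g x k) = (\<lambda>k. d x * P (g x) k)"
    by (rule linop_scale[OF lin]) (use insert(4) in simp)
  also have "P (\<lambda>k. \<Sum>i\<in>F. d i * g i k) = (\<lambda>k. \<Sum>i\<in>F. d i * P (g i) k)"
    using insert by auto
  finally show ?case using insert(1,2) by simp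
qed

context RS begin

lemma block_exists:
  assumes e: "0 < \<epsilon>" "\<epsilon> < Gam"
  shows "\<exists>f e. s < e \<and> (\<forall>j. f j \<noteq> 0 \<longrightarrow> s \<le> j \<and> j < e) \<and> (\<Sum>j<e. f j) = 0 \<and>
     0 < (\<Sum>j<e. (cmod (f j))^2) \<and>
     (Gam - \<epsilon>) * (\<Sum>j<e. (cmod (f j))^2) \<le> (\<Sum>k<e. ww \<alpha> k * (cmod (SS f k))^2)"
proof -
  have e2: "0 < \<epsilon>/2" using e by simp
  obtain x where x: "x \<in> GS s" "G s - \<epsilon>/2 < x" using G_approx[OF e2] by blast
  then obtain f0 K0 where xdef: "x = (\<Sum>k<K0. ww \<alpha> k * (cmod (SS f0 k))^2)"
    and supp0: "\<forall>j. f0 j \<noteq> 0 \<longrightarrow> s \<le> j \<and> j < K0" and nb0: "(\<Sum>j<K0. (cmod (f0 j))^2) \<le> 1"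
    unfolding GS_def by blast
  define K where "K = max K0 s"
  have supp: "\<forall>j. f0 j \<noteq> 0 \<longrightarrow> s \<le> j \<and> j < K" using supp0 by (auto simp: K_def)
  have nb: "(\<Sum>j<K. (cmod (f0 j))^2) \<le> 1"
  proof -
    have "(\<Sum>j<K. (cmod (f0 j))^2) = (\<Sum>j<K0. (cmod (f0 j))^2)"
      by (rule sum.mono_neutral_right) (use supp0 in \<open>auto simp: K_def\<close>)
    then show ?thesis using nb0 by simp
  qed
  have xK: "x \<le> (\<Sum>k<K. ww \<alpha> k * (cmod (SS f0 k))^2)"
    unfolding xdef by (rule sum_mono2) (auto simp: K_def)
  have xg: "Gam - \<epsilon>/2 < x" using x(2) Gam_le[of s] by simp
  define \<sigma> where "\<sigma> = (\<Sum>j<K. f0 j)"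
  define a where "a = Gam - \<epsilon>"
  have a0: "0 < a" using e by (simp add: a_def)
  obtain L0 :: nat where L0: "a * (cmod \<sigma>)^2 / (\<epsilon>/2) < real L0" using reals_Archimedean2 by blast
  define L where "L = max L0 (Suc s)"
  have Ls: "s < L" by (simp add: L_def)
  have LL: "a * (cmod \<sigma>)^2 / (\<epsilon>/2) < real L" using L0 by (simp add: L_def)
  have Lpos: "0 < L" using Ls by simp
  define f where "f j = (if j < K then f0 j else if j < K + L then - \<sigma> / of_nat L else 0)" for j
  define e' where "e' = K + L"
  have se: "s < e'" using Ls by (simp add: e'_def)
  have fsupp: "\<forall>j. f j \<noteq> 0 \<longrightarrow> s \<le> j \<and> j < e'"
    using supp by (auto simp: f_def e'_def K_def)
  have split: "(\<Sum>j<e'. g j) = (\<Sum>j<K. g j) + (\<Sum>j\<in>{K..<K+L}. g j)" for g :: "nat \<Rightarrow> 'b::comm_monoid_add"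
    using sum.atLeastLessThan_concat[of 0 K "K+L" g] by (simp add: e'_def atLeast0LessThan)
  have sum0: "(\<Sum>j<e'. f j) = 0"
  proof -
    have "(\<Sum>j<K. f j) = \<sigma>" by (simp add: f_def \<sigma>_def)
    moreover have "(\<Sum>j\<in>{K..<K+L}. f j) = - \<sigma>"
    proof -
      have "(\<Sum>j\<in>{K..<K+L}. f j) = (\<Sum>j\<in>{K..<K+L}. - \<sigma> / of_nat L)"
        by (rule sum.cong) (auto simp: f_def)
      also have "\<dots> = - \<sigma>" using Lpos by simp
      finally show ?thesis .
    qed
    ultimately show ?thesis using split[of f] by simp
  qed
  have norm_f: "(\<Sum>j<e'. (cmod (f j))^2) \<le> 1 + (cmod \<sigma>)^2 / real L"
  proof -
    have "(\<Sum>j<K. (cmod (f j))^2) = (\<Sum>j<K. (cmod (f0 j))^2)" by (simp add: f_def)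
    moreover have "(\<Sum>j\<in>{K..<K+L}. (cmod (f j))^2) = (cmod \<sigma>)^2 / real L"
    proof -
      have "(\<Sum>j\<in>{K..<K+L}. (cmod (f j))^2) = (\<Sum>j\<in>{K..<K+L}. (cmod \<sigma> / real L)^2)"
        by (rule sum.cong) (auto simp: f_def norm_divide)
      also have "\<dots> = real L * (cmod \<sigma> / real L)^2" by simp
      also have "\<dots> = (cmod \<sigma>)^2 / real L" using Lpos by (simp add: power2_eq_square)
      finally show ?thesis .
    qed
    ultimately show ?thesis using split[of "\<lambda>j. (cmod (f j))^2"] nb by simp
  qed
  have SSeq: "SS f k = SS f0 k" if "k < K" for k
    unfolding SS_def by (rule sum.cong) (use that in \<open>auto simp: f_def\<close>)
  have val: "x \<le> (\<Sum>k<e'. ww \<alpha> k * (cmod (SS f k))^2)"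
  proof -
    have "(\<Sum>k<K. ww \<alpha> k * (cmod (SS f0 k))^2) = (\<Sum>k<K. ww \<alpha> k * (cmod (SS f k))^2)"
      by (simp add: SSeq)
    also have "\<dots> \<le> (\<Sum>k<e'. ww \<alpha> k * (cmod (SS f k))^2)" by (rule sum_mono2) (auto simp: e'_def)
    finally show ?thesis using xK by simp
  qed
  have small: "a * (cmod \<sigma>)^2 / real L < \<epsilon> / 2"
  proof -
    have "a * (cmod \<sigma>)^2 < real L * (\<epsilon>/2)" using LL e2 by (simp add: divide_less_eq mult.commute)
    then show ?thesis using Lpos by (simp add: divide_less_eq mult.commute)
  qed
  have "a * (\<Sum>j<e'. (cmod (f j))^2) \<le> a * (1 + (cmod \<sigma>)^2 / real L)"
    using norm_f a0 by (intro mult_left_mono) auto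
  also have "\<dots> = a + a * (cmod \<sigma>)^2 / real L" by (simp add: algebra_simps)
  finally have ineq0: "a * (\<Sum>j<e'. (cmod (f j))^2) \<le> a + a * (cmod \<sigma>)^2 / real L" .
  have ineq: "a * (\<Sum>j<e'. (cmod (f j))^2) \<le> (\<Sum>k<e'. ww \<alpha> k * (cmod (SS f k))^2)"
    using ineq0 small xg val unfolding a_def by linarith
  have pos: "0 < (\<Sum>j<e'. (cmod (f j))^2)"
  proof (rule ccontr)
    assume "\<not> ?thesis"
    then have "(\<Sum>j<e'. (cmod (f j))^2) = 0" using sum_nonneg[of "{..<e'}" "\<lambda>j. (cmod (f j))^2"]
      by simp
    then have "\<forall>j<e'. f j = 0" by (simp add: sum_nonneg_eq_0_iff)
    then have "\<forall>j. f j = 0" using fsupp by blast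
    then have "(\<Sum>k<e'. ww \<alpha> k * (cmod (SS f k))^2) = 0" by (simp add: SS_def)
    then show False using val xg e by simp
  qed
  show ?thesis
    apply (rule exI[of _ f], rule exI[of _ e'])
    using se fsupp sum0 pos ineq unfolding a_def by (intro conjI)
qed

lemma blocks_exist:
  assumes e: "0 < \<epsilon>" "\<epsilon> < Gam"
  shows "\<exists>st fb. strict_mono st \<and> (\<forall>i j. fb i j \<noteq> 0 \<longrightarrow> st i \<le> j \<and> j < st (Suc i)) \<and>
     (\<forall>i. (\<Sum>j<st (Suc i). fb i j) = 0) \<and> (\<forall>i. 0 < (\<Sum>j<st (Suc i). (cmod (fb i j))^2)) \<and>
     (\<forall>i. (Gam - \<epsilon>) * (\<Sum>j<st (Suc i). (cmod (fb i j))^2) \<le> (\<Sum>k<st (Suc i). ww \<alpha> k * (cmod (SS (fb i) k))^2))"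
proof -
  let ?Q = "\<lambda>s f e. s < e \<and> (\<forall>j. f j \<noteq> 0 \<longrightarrow> s \<le> j \<and> j < e) \<and> (\<Sum>j<e. f j) = 0 \<and>
     0 < (\<Sum>j<e. (cmod (f j))^2) \<and>
     (Gam - \<epsilon>) * (\<Sum>j<e. (cmod (f j))^2) \<le> (\<Sum>k<e. ww \<alpha> k * (cmod (SS f k))^2)"
  have "\<forall>s. \<exists>fe. ?Q s (fst fe) (snd fe)"
  proof
    fix s
    obtain f0 e0 where "?Q s f0 e0" using block_exists[OF e, of s] by blast
    then show "\<exists>fe. ?Q s (fst fe) (snd fe)" by (intro exI[of _ "(f0, e0)"]) simp
  qed
  from choice[OF this] obtain FE where FE: "\<forall>s. ?Q s (fst (FE s)) (snd (FE s))" by blast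
  define st where "st i = ((snd \<circ> FE) ^^ i) 0" for i
  have stS: "st (Suc i) = snd (FE (st i))" for i by (simp add: st_def)
  define fb where "fb i = fst (FE (st i))" for i
  have Qi: "?Q (st i) (fb i) (st (Suc i))" for i
    using FE[rule_format, of "st i"] unfolding fb_def stS .
  have "strict_mono st" unfolding strict_mono_Suc_iff
  proof
    fix i show "st i < st (Suc i)" using Qi[of i] by blast
  qed
  moreover have "\<forall>i j. fb i j \<noteq> 0 \<longrightarrow> st i \<le> j \<and> j < st (Suc i)" using Qi by blast
  moreover have "\<forall>i. (\<Sum>j<st (Suc i). fb i j) = 0" using Qi by blast
  moreover have "\<forall>i. 0 < (\<Sum>j<st (Suc i). (cmod (fb i j))^2)" using Qi by blast
  moreover have "\<forall>i. (Gam - \<epsilon>) * (\<Sum>j<st (Suc i). (cmod (fb i j))^2) \<le> (\<Sum>k<st (Suc i). ww \<alpha> k * (cmod (SS (fb i) k))^2)"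
    using Qi by blast
  ultimately show ?thesis by (intro exI[of _ st] exI[of _ fb]) (intro conjI)
qed

end


lemma Ralpha_SS: "Ralpha \<alpha> f k = \<alpha> k * SS f k" by (simp add: Ralpha_def SS_def)

locale blocks = RS +
  fixes \<epsilon> :: real and st :: "nat \<Rightarrow> nat" and fb :: "nat \<Rightarrow> nat \<Rightarrow> complex"
  assumes smono: "strict_mono st"
    and bsupp: "\<And>i j. fb i j \<noteq> 0 \<Longrightarrow> st i \<le> j \<and> j < st (Suc i)"
    and bsum: "\<And>i. (\<Sum>j<st (Suc i). fb i j) = 0"
    and bpos: "\<And>i. 0 < (\<Sum>j<st (Suc i). (cmod (fb i j))^2)"
    and bval: "\<And>i. (Gam - \<epsilon>) * (\<Sum>j<st (Suc i). (cmod (fb i j))^2) \<le> (\<Sum>k<st (Suc i). ww \<alpha> k * (cmod (SS (fb i) k))^2)"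
begin

lemma st_le: "i < i' \<Longrightarrow> st (Suc i) \<le> st i'"
  using smono by (simp add: strict_mono_less_eq)

lemma st_mono: "i \<le> i' \<Longrightarrow> st i \<le> st i'"
  using smono by (simp add: strict_mono_less_eq)

lemma fb_zero: "st (Suc i) \<le> j \<Longrightarrow> fb i j = 0"
  using bsupp[of i j] by linarith

lemma SSb_nz: assumes nz: "SS (fb i) k \<noteq> 0" shows "st i \<le> k \<and> k < st (Suc i)"
proof -
  have s1: "\<forall>j. fb i j \<noteq> 0 \<longrightarrow> st i \<le> j" using bsupp by blast
  have s2: "\<forall>j. fb i j \<noteq> 0 \<longrightarrow> j < st (Suc i)" using bsupp by blast
  have "\<not> k < st i" using SS_zero_below[OF s1] nz by blast
  moreover have "\<not> st (Suc i) \<le> k" using SS_zero_above[OF s2 bsum] nz by blast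
  ultimately show ?thesis by simp
qed

lemma SSb_zero: "st (Suc i) \<le> k \<Longrightarrow> SS (fb i) k = 0"
  using SSb_nz[of i k] by linarith

lemma disj: "st i \<le> k \<Longrightarrow> k < st (Suc i) \<Longrightarrow> st i' \<le> k \<Longrightarrow> k < st (Suc i') \<Longrightarrow> i = i'"
proof (rule ccontr)
  assume a: "st i \<le> k" "k < st (Suc i)" "st i' \<le> k" "k < st (Suc i')" and ne: "i \<noteq> i'"
  then consider "i < i'" | "i' < i" by linarith
  then show False
  proof cases
    case 1 then show False using st_le[OF 1] a by linarith
  next
    case 2 then show False using st_le[OF 2] a by linarith
  qed
qed

definition hh :: "(nat \<Rightarrow> complex) \<Rightarrow> nat \<Rightarrow> nat \<Rightarrow> complex" where
  "hh d N = (\<lambda>j. \<Sum>i\<le>N. d i * fb i j)"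

lemma hh_zero: assumes "st (Suc N) \<le> j" shows "hh d N j = 0"
  unfolding hh_def
proof (rule sum.neutral, rule ballI)
  fix i assume "i \<in> {..N}"
  then have "st (Suc i) \<le> st (Suc N)" by (simp add: st_mono)
  then show "d i * fb i j = 0" using fb_zero assms by simp
qed

lemma SS_hh: "SS (hh d N) k = (\<Sum>i\<le>N. d i * SS (fb i) k)"
  unfolding SS_def hh_def sum_distrib_left by (rule sum.swap)

lemma SS_hh_zero: assumes "st (Suc N) \<le> k" shows "SS (hh d N) k = 0"
  unfolding SS_hh
proof (rule sum.neutral, rule ballI)
  fix i assume "i \<in> {..N}"
  then have "st (Suc i) \<le> st (Suc N)" by (simp add: st_mono)
  then show "d i * SS (fb i) k = 0" using SSb_zero assms by simp
qed

lemma hh_sq: "(cmod (hh d N j))^2 = (\<Sum>i\<le>N. (cmod (d i))^2 * (cmod (fb i j))^2)"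
proof -
  have "(cmod (\<Sum>i\<le>N. d i * fb i j))^2 = (\<Sum>i\<le>N. (cmod (d i * fb i j))^2)"
  proof (rule one_nz_sq)
    fix i i' assume "d i * fb i j \<noteq> 0" "d i' * fb i' j \<noteq> 0"
    then have "fb i j \<noteq> 0" "fb i' j \<noteq> 0" by auto
    then show "i = i'" using bsupp[of i j] bsupp[of i' j] disj by blast
  qed simp
  then show ?thesis by (simp add: hh_def norm_mult power_mult_distrib)
qed

lemma SS_hh_sq: "(cmod (SS (hh d N) k))^2 = (\<Sum>i\<le>N. (cmod (d i))^2 * (cmod (SS (fb i) k))^2)"
proof -
  have "(cmod (\<Sum>i\<le>N. d i * SS (fb i) k))^2 = (\<Sum>i\<le>N. (cmod (d i * SS (fb i) k))^2)"
  proof (rule one_nz_sq)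
    fix i i' assume "d i * SS (fb i) k \<noteq> 0" "d i' * SS (fb i') k \<noteq> 0"
    then have "SS (fb i) k \<noteq> 0" "SS (fb i') k \<noteq> 0" by auto
    then show "i = i'" using SSb_nz[of i k] SSb_nz[of i' k] disj by blast
  qed simp
  then show ?thesis by (simp add: SS_hh norm_mult power_mult_distrib)
qed

lemma hh_l2: "l2 (hh d N)" and hh_norm2: "(l2norm (hh d N))^2 = (\<Sum>j<st (Suc N). (cmod (hh d N j))^2)"
proof -
  have z: "\<And>j. st (Suc N) \<le> j \<Longrightarrow> hh d N j = 0" by (rule hh_zero)
  show "l2 (hh d N)" by (rule l2_finite(1)[of "st (Suc N)", OF z])
  show "(l2norm (hh d N))^2 = (\<Sum>j<st (Suc N). (cmod (hh d N j))^2)" by (rule l2_finite(2)[of "st (Suc N)", OF z])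
qed

lemma T_hh_norm2: "(l2norm (Ralpha \<alpha> (hh d N)))^2 = (\<Sum>k<st (Suc N). ww \<alpha> k * (cmod (SS (hh d N) k))^2)"
proof -
  have z: "\<And>k. st (Suc N) \<le> k \<Longrightarrow> Ralpha \<alpha> (hh d N) k = 0" by (simp add: Ralpha_SS SS_hh_zero)
  have "(l2norm (Ralpha \<alpha> (hh d N)))^2 = (\<Sum>k<st (Suc N). (cmod (Ralpha \<alpha> (hh d N) k))^2)"
    by (rule l2_finite(2)[of "st (Suc N)", OF z])
  then show ?thesis by (simp add: partial_T)
qed

lemma sum_swap_sq:
  fixes a :: "nat \<Rightarrow> real" and b :: "nat \<Rightarrow> nat \<Rightarrow> real"
  shows "(\<Sum>j<M. \<Sum>i\<le>N. a i * b i j) = (\<Sum>i\<le>N. a i * (\<Sum>j<M. b i j))"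
  unfolding sum_distrib_left by (rule sum.swap)

lemma hh_ratio:
  "(Gam - \<epsilon>) * (\<Sum>j<st (Suc N). (cmod (hh d N j))^2) \<le> (\<Sum>k<st (Suc N). ww \<alpha> k * (cmod (SS (hh d N) k))^2)"
proof -
  define M where "M = st (Suc N)"
  have eqF: "(\<Sum>j<M. (cmod (fb i j))^2) = (\<Sum>j<st (Suc i). (cmod (fb i j))^2)" if "i \<le> N" for i
  proof (rule sum.mono_neutral_right)
    show "{..<st (Suc i)} \<subseteq> {..<M}" using that by (auto simp: M_def intro: order_less_le_trans st_mono)
  qed (auto simp: fb_zero)
  have eqS: "(\<Sum>k<M. ww \<alpha> k * (cmod (SS (fb i) k))^2) = (\<Sum>k<st (Suc i). ww \<alpha> k * (cmod (SS (fb i) k))^2)"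
    if "i \<le> N" for i
  proof (rule sum.mono_neutral_right)
    show "{..<st (Suc i)} \<subseteq> {..<M}" using that by (auto simp: M_def intro: order_less_le_trans st_mono)
  qed (auto simp: SSb_zero)
  have "(Gam - \<epsilon>) * (\<Sum>j<M. (cmod (hh d N j))^2) = (Gam - \<epsilon>) * (\<Sum>i\<le>N. (cmod (d i))^2 * (\<Sum>j<M. (cmod (fb i j))^2))"
    by (simp only: hh_sq sum_swap_sq)
  also have "\<dots> = (\<Sum>i\<le>N. (cmod (d i))^2 * ((Gam - \<epsilon>) * (\<Sum>j<M. (cmod (fb i j))^2)))"
    by (simp add: sum_distrib_left mult_ac)
  also have "\<dots> \<le> (\<Sum>i\<le>N. (cmod (d i))^2 * (\<Sum>k<M. ww \<alpha> k * (cmod (SS (fb i) k))^2))"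
  proof (rule sum_mono, rule mult_left_mono)
    fix i assume "i \<in> {..N}"
    then show "(Gam - \<epsilon>) * (\<Sum>j<M. (cmod (fb i j))^2) \<le> (\<Sum>k<M. ww \<alpha> k * (cmod (SS (fb i) k))^2)"
      using bval[of i] eqF[of i] eqS[of i] by simp
  qed simp
  also have "\<dots> = (\<Sum>k<M. ww \<alpha> k * (cmod (SS (hh d N) k))^2)"
  proof -
    have "(\<Sum>k<M. ww \<alpha> k * (cmod (SS (hh d N) k))^2) = (\<Sum>k<M. \<Sum>i\<le>N. (cmod (d i))^2 * (ww \<alpha> k * (cmod (SS (fb i) k))^2))"
      by (simp add: SS_hh_sq sum_distrib_left mult_ac)
    also have "\<dots> = (\<Sum>i\<le>N. (cmod (d i))^2 * (\<Sum>k<M. ww \<alpha> k * (cmod (SS (fb i) k))^2))"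
      by (rule sum_swap_sq)
    finally show ?thesis by simp
  qed
  finally show ?thesis unfolding M_def .
qed

lemma hh_pos: assumes i0: "i0 \<le> N" "d i0 \<noteq> 0" shows "0 < (\<Sum>j<st (Suc N). (cmod (hh d N j))^2)"
proof -
  define M where "M = st (Suc N)"
  have "(\<Sum>j<M. (cmod (hh d N j))^2) = (\<Sum>i\<le>N. (cmod (d i))^2 * (\<Sum>j<M. (cmod (fb i j))^2))"
    by (simp only: hh_sq sum_swap_sq)
  also have "\<dots> \<ge> (cmod (d i0))^2 * (\<Sum>j<M. (cmod (fb i0 j))^2)"
    by (rule member_le_sum[of i0 "{..N}" "\<lambda>i. (cmod (d i))^2 * (\<Sum>j<M. (cmod (fb i j))^2)"])
       (use i0 in \<open>auto intro!: mult_nonneg_nonneg sum_nonneg\<close>)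
  finally have ge: "(cmod (d i0))^2 * (\<Sum>j<M. (cmod (fb i0 j))^2) \<le> (\<Sum>j<M. (cmod (hh d N j))^2)" .
  have "(\<Sum>j<st (Suc i0). (cmod (fb i0 j))^2) \<le> (\<Sum>j<M. (cmod (fb i0 j))^2)"
    by (rule sum_mono2) (use i0 in \<open>auto simp: M_def intro: order_less_le_trans st_mono\<close>)
  then have "0 < (\<Sum>j<M. (cmod (fb i0 j))^2)" using bpos[of i0] by linarith
  then have "0 < (cmod (d i0))^2 * (\<Sum>j<M. (cmod (fb i0 j))^2)" using i0 by simp
  then show ?thesis using ge unfolding M_def by linarith
qed

lemma hh_scale: "hh (\<lambda>i. r * d i) N = (\<lambda>j. r * hh d N j)"
  by (simp add: hh_def sum_distrib_left mult_ac fun_eq_iff)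

lemma fb_l2: "l2 (fb i)"
  by (rule l2_finite(1)[of "st (Suc i)"]) (rule fb_zero)

end


context blocks begin

lemma opnorm_lower:
  assumes fr: "finite_rank P"
  shows "sqrt (Gam - \<epsilon>) \<le> opnorm (\<lambda>f k. Ralpha \<alpha> f k - P f k)"
proof -
  have lin: "linear_op P" and bnd: "bounded_op P" using fr unfolding finite_rank_def by blast+
  have ex: "\<exists>(n::nat) (v::nat \<Rightarrow> nat \<Rightarrow> complex). (\<forall>i<n. l2 (v i)) \<and> (\<forall>f. l2 f \<longrightarrow> (\<exists>c. P f = (\<lambda>k. \<Sum>i<n. c i * v i k)))"
    using fr unfolding finite_rank_def by (elim conjE)
  obtain n :: nat and v :: "nat \<Rightarrow> nat \<Rightarrow> complex" where rep0: "(\<forall>i<n. l2 (v i)) \<and> (\<forall>f. l2 f \<longrightarrow> (\<exists>c. P f = (\<lambda>k. \<Sum>i<n. c i * v i k)))"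
    using ex by (elim exE) (rule that)
  have rep: "\<forall>f. l2 f \<longrightarrow> (\<exists>c. P f = (\<lambda>k. \<Sum>i<n. c i * v i k))" using rep0 by (rule conjunct2)
  have "\<forall>i. \<exists>c. P (fb i) = (\<lambda>k. \<Sum>l<n. c l * v l k)" using rep fb_l2 by blast
  from choice[OF this] obtain cc where cc: "\<forall>i. P (fb i) = (\<lambda>k. \<Sum>l<n. cc i l * v l k)" by blast
  obtain d where d: "\<exists>i\<in>{..n}. d i \<noteq> 0" "\<forall>l<n. (\<Sum>i\<in>{..n}. d i * cc i l) = 0"
    using lin_dep[of "{..n}" n cc] by auto
  then obtain i0 where i0: "i0 \<le> n" "d i0 \<noteq> 0" by auto
  define M where "M = st (Suc n)"
  define s where "s = (\<Sum>j<M. (cmod (hh d n j))^2)"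
  have s0: "0 < s" unfolding s_def M_def by (rule hh_pos[of i0 n d, OF i0])
  define r where "r = 1 / sqrt s"
  define d' where "d' i = complex_of_real r * d i" for i
  define h where "h = hh d' n"
  have hsc: "h = (\<lambda>j. complex_of_real r * hh d n j)" unfolding h_def d'_def by (rule hh_scale)
  have hn: "(\<Sum>j<M. (cmod (h j))^2) = 1"
  proof -
    have "(\<Sum>j<M. (cmod (h j))^2) = r^2 * s"
      by (simp add: hsc s_def norm_mult power_mult_distrib sum_distrib_left)
    also have "\<dots> = 1" using s0 by (simp add: r_def power_divide)
    finally show ?thesis .
  qed
  have hl2: "l2 h" unfolding h_def by (rule hh_l2)
  have hnorm: "l2norm h = 1"
  proof -
    have "(l2norm h)^2 = 1" using hh_norm2[of d' n] hn by (simp add: h_def M_def)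
    then show ?thesis using l2norm_nonneg[OF hl2] by (simp add: power2_eq_1_iff)
  qed
  have Ph: "P h = (\<lambda>k. 0)"
  proof -
    have "P h = (\<lambda>k. \<Sum>i\<in>{..n}. d' i * P (fb i) k)"
      unfolding h_def hh_def by (rule linop_sum[OF lin]) (auto simp: fb_l2)
    also have "\<dots> = (\<lambda>k. \<Sum>l<n. (\<Sum>i\<in>{..n}. d' i * cc i l) * v l k)"
    proof
      fix k
      have "(\<Sum>i\<in>{..n}. d' i * P (fb i) k) = (\<Sum>i\<in>{..n}. \<Sum>l<n. d' i * (cc i l * v l k))"
        using cc by (simp add: sum_distrib_left)
      also have "\<dots> = (\<Sum>l<n. \<Sum>i\<in>{..n}. d' i * (cc i l * v l k))" by (rule sum.swap)
      also have "\<dots> = (\<Sum>l<n. (\<Sum>i\<in>{..n}. d' i * cc i l) * v l k)"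
        by (rule sum.cong[OF refl]) (simp add: sum_distrib_right mult.assoc)
      finally show "(\<Sum>i\<in>{..n}. d' i * P (fb i) k) = (\<Sum>l<n. (\<Sum>i\<in>{..n}. d' i * cc i l) * v l k)" .
    qed
    also have "\<dots> = (\<lambda>k. 0)"
    proof -
      have "(\<Sum>i\<in>{..n}. d' i * cc i l) = 0" if "l < n" for l
      proof -
        have "(\<Sum>i\<in>{..n}. d' i * cc i l) = complex_of_real r * (\<Sum>i\<in>{..n}. d i * cc i l)"
          by (simp add: d'_def sum_distrib_left mult_ac)
        then show ?thesis using d(2) that by simp
      qed
      then show ?thesis by simp
    qed
    finally show ?thesis .
  qed
  have Th: "Gam - \<epsilon> \<le> (l2norm (Ralpha \<alpha> h))^2"
    using hh_ratio[of d' n] T_hh_norm2[of d' n] hn by (simp add: h_def M_def)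
  have "l2norm (\<lambda>k. Ralpha \<alpha> h k - P h k) \<le> opnorm (\<lambda>f k. Ralpha \<alpha> f k - P f k)"
    by (rule OPS_upper[OF bnd hl2]) (simp add: hnorm)
  moreover have "(\<lambda>k. Ralpha \<alpha> h k - P h k) = Ralpha \<alpha> h" using Ph by simp
  moreover have "sqrt (Gam - \<epsilon>) \<le> l2norm (Ralpha \<alpha> h)"
    by (rule real_le_lsqrt[OF l2norm_nonneg[OF Tl2[OF hl2]] Th])
  ultimately show ?thesis by simp
qed

end

context RS begin

lemma RSax: "RS \<alpha> C"
  by (rule RS.intro) (fact l2a, fact Tl2, fact Tb, fact Cnn)

lemma blocks_interp:
  assumes e: "0 < \<epsilon>" "\<epsilon> < Gam"
  shows "\<exists>st fb. blocks \<alpha> C \<epsilon> st fb"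
proof -
  obtain st fb where p: "strict_mono st" "\<forall>i j. fb i j \<noteq> 0 \<longrightarrow> st i \<le> j \<and> j < st (Suc i)"
     "\<forall>i. (\<Sum>j<st (Suc i). fb i j) = 0" "\<forall>i. 0 < (\<Sum>j<st (Suc i). (cmod (fb i j))^2)"
     "\<forall>i. (Gam - \<epsilon>) * (\<Sum>j<st (Suc i). (cmod (fb i j))^2) \<le> (\<Sum>k<st (Suc i). ww \<alpha> k * (cmod (SS (fb i) k))^2)"
    using blocks_exist[OF e] by blast
  have "blocks \<alpha> C \<epsilon> st fb"
    by (rule blocks.intro[OF RSax blocks_axioms.intro]) (use p in blast)+
  then show ?thesis by blast
qed

lemma ess_lower_P:
  assumes fr: "finite_rank P"
  shows "sqrt Gam \<le> opnorm (\<lambda>f k. Ralpha \<alpha> f k - P f k)"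
proof -
  have bnd: "bounded_op P" using fr unfolding finite_rank_def by blast
  have o0: "0 \<le> opnorm (\<lambda>f k. Ralpha \<alpha> f k - P f k)" by (rule opnorm_nonneg[OF bnd])
  show ?thesis
  proof (cases "Gam = 0")
    case True then show ?thesis using o0 by simp
  next
    case False
    then have G0: "0 < Gam" using Gam_nonneg by simp
    have all: "sqrt (Gam - \<epsilon>) \<le> opnorm (\<lambda>f k. Ralpha \<alpha> f k - P f k)" if ee: "0 < \<epsilon>" "\<epsilon> < Gam" for \<epsilon>
    proof -
      obtain st fb where "blocks \<alpha> C \<epsilon> st fb" using blocks_interp[OF ee] by blast
      then interpret B: blocks \<alpha> C \<epsilon> st fb .
      show ?thesis by (rule B.opnorm_lower[OF fr])
    qed
    show ?thesis
    proof (rule ccontr)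
      define on where "on = opnorm (\<lambda>f k. Ralpha \<alpha> f k - P f k)"
      assume "\<not> ?thesis"
      then have lt: "on < sqrt Gam" by (simp add: on_def)
      have "on^2 < (sqrt Gam)^2" using lt o0 unfolding on_def[symmetric] by (intro power_strict_mono) auto
      then have lt2: "on^2 < Gam" using G0 by simp
      define \<epsilon> where "\<epsilon> = (Gam - on^2) / 2"
      have e1: "0 < \<epsilon>" unfolding \<epsilon>_def using lt2 by simp
      have e2: "\<epsilon> < Gam" unfolding \<epsilon>_def using lt2 G0 by (simp add: field_simps add_pos_nonneg)
      note e = e1 e2
      have "sqrt (Gam - \<epsilon>) \<le> on" using all[OF e] by (simp add: on_def)
      moreover have "on < sqrt (Gam - \<epsilon>)"
      proof -
        have "on^2 < Gam - \<epsilon>" using lt2 by (simp add: \<epsilon>_def field_simps)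
        then have "sqrt (on^2) < sqrt (Gam - \<epsilon>)" by (rule real_sqrt_less_mono)
        then show ?thesis using o0 by (simp add: on_def)
      qed
      ultimately show False by simp
    qed
  qed
qed

definition ESS :: "real set" where
  "ESS = {opnorm (\<lambda>f k. Ralpha \<alpha> f k - P f k) | P. finite_rank P}"

lemma ess_eq: "ess_norm (Ralpha \<alpha>) = Inf ESS"
  by (simp add: ess_norm_def ESS_def)

lemma ess_norm_val: "ess_norm (Ralpha \<alpha>) = sqrt Gam"
proof -
  have ne: "ESS \<noteq> {}" using PN_finite_rank unfolding ESS_def by blast
  have bb: "bdd_below ESS"
    unfolding ESS_def by (rule bdd_belowI[of _ 0]) (auto simp: finite_rank_def intro: opnorm_nonneg)
  have ge: "sqrt Gam \<le> Inf ESS"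
    by (rule cInf_greatest[OF ne]) (auto simp: ESS_def intro: ess_lower_P)
  have le: "Inf ESS \<le> sqrt (G N)" for N
  proof -
    have "Inf ESS \<le> opnorm (\<lambda>f k. Ralpha \<alpha> f k - PN N f k)"
      by (rule cInf_lower[OF _ bb]) (auto simp: ESS_def intro: PN_finite_rank)
    also have "\<dots> \<le> sqrt (G N)" by (rule opnorm_PN)
    finally show ?thesis .
  qed
  have lim: "(\<lambda>N. sqrt (G N)) \<longlonglongrightarrow> sqrt Gam" using G_lim by (intro tendsto_intros)
  have "Inf ESS \<le> sqrt Gam" by (rule LIMSEQ_le_const[OF lim]) (use le in blast)
  then show ?thesis using ge ess_eq by simp
qed

end


lemma L2_sub_le_l2norm:
  assumes "l2 f"
  shows "L2_set (\<lambda>k. cmod (f k)) {a..<b} \<le> l2norm f"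
proof -
  have "(\<Sum>k\<in>{a..<b}. (cmod (f k))^2) \<le> (\<Sum>k<b. (cmod (f k))^2)"
    by (rule sum_mono2) auto
  also have "\<dots> \<le> (l2norm f)^2" by (rule l2_partial_le[OF assms])
  finally have "sqrt (\<Sum>k\<in>{a..<b}. (cmod (f k))^2) \<le> sqrt ((l2norm f)^2)" by (rule real_sqrt_le_mono)
  then show ?thesis using assms by (simp add: L2_set_def)
qed

lemma block_tail_le:
  assumes "summable (\<lambda>k. (cmod (g k))^2)"
  shows "(\<Sum>k\<in>{a..<b}. (cmod (g k))^2) \<le> (\<Sum>i. (cmod (g (i + a)))^2)"
proof -
  have "(\<Sum>k\<in>{a..<b}. (cmod (g k))^2) = (\<Sum>i\<in>{0..<b-a}. (cmod (g (i + a)))^2)"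
    by (subst sum.atLeastLessThan_shift_0) (simp add: o_def add.commute)
  also have "\<dots> \<le> (\<Sum>i. (cmod (g (i + a)))^2)"
    unfolding atLeast0LessThan
    by (intro sum_le_suminf summable_ignore_initial_segment[OF assms]) auto
  finally show ?thesis .
qed

context blocks begin

lemma not_compact:
  assumes pos: "0 < Gam - \<epsilon>"
  shows "\<not> compact_op (Ralpha \<alpha>)"
proof
  assume comp: "compact_op (Ralpha \<alpha>)"
  define sb where "sb i = (\<Sum>j<st (Suc i). (cmod (fb i j))^2)" for i
  define rb where "rb i = 1 / sqrt (sb i)" for i
  define F where "F i = (\<lambda>j. complex_of_real (rb i) * fb i j)" for i
  have sb0: "0 < sb i" for i using bpos by (simp add: sb_def)
  have Fl2: "l2 (F i)" for i unfolding F_def by (rule l2_scale[OF fb_l2])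
  have Fnorm: "l2norm (F i) = 1" for i
  proof -
    have z: "\<And>j. st (Suc i) \<le> j \<Longrightarrow> F i j = 0" by (simp add: F_def fb_zero)
    have "(l2norm (F i))^2 = (\<Sum>j<st (Suc i). (cmod (F i j))^2)" by (rule l2_finite(2)[of "st (Suc i)", OF z])
    also have "\<dots> = (rb i)^2 * sb i"
      by (simp add: F_def sb_def norm_mult power_mult_distrib sum_distrib_left)
    also have "\<dots> = 1" using sb0[of i] by (simp add: rb_def power_divide)
    finally show ?thesis using l2norm_nonneg[OF Fl2[of i]] by (auto simp: power2_eq_1_iff)
  qed
  have blockval: "Gam - \<epsilon> \<le> (\<Sum>k\<in>{st i..<st (Suc i)}. (cmod (Ralpha \<alpha> (F i) k))^2)" for i
  proof -
    have "(\<Sum>k\<in>{st i..<st (Suc i)}. (cmod (Ralpha \<alpha> (F i) k))^2)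
        = (rb i)^2 * (\<Sum>k\<in>{st i..<st (Suc i)}. ww \<alpha> k * (cmod (SS (fb i) k))^2)"
      by (simp add: F_def Ralpha_scale Ralpha_norm2 norm_mult power_mult_distrib sum_distrib_left mult_ac)
    also have "(\<Sum>k\<in>{st i..<st (Suc i)}. ww \<alpha> k * (cmod (SS (fb i) k))^2)
        = (\<Sum>k<st (Suc i). ww \<alpha> k * (cmod (SS (fb i) k))^2)"
    proof (rule sum.mono_neutral_left)
      show "\<forall>k\<in>{..<st (Suc i)} - {st i..<st (Suc i)}. ww \<alpha> k * (cmod (SS (fb i) k))^2 = 0"
      proof
        fix k assume "k \<in> {..<st (Suc i)} - {st i..<st (Suc i)}"
        then have "k < st i" by auto
        then have "SS (fb i) k = 0" using SSb_nz[of i k] by linarith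
        then show "ww \<alpha> k * (cmod (SS (fb i) k))^2 = 0" by simp
      qed
    qed auto
    also have "(rb i)^2 * (\<Sum>k<st (Suc i). ww \<alpha> k * (cmod (SS (fb i) k))^2) \<ge> (rb i)^2 * ((Gam - \<epsilon>) * sb i)"
      using bval[of i] by (intro mult_left_mono) (auto simp: sb_def)
    moreover have "(rb i)^2 * ((Gam - \<epsilon>) * sb i) = Gam - \<epsilon>"
      using sb0[of i] by (simp add: rb_def power_divide)
    ultimately show ?thesis by simp
  qed
  obtain g r where g: "l2 g" and r: "strict_mono r"
    and lim: "(\<lambda>m. l2norm (\<lambda>k. Ralpha \<alpha> (F (r m)) k - g k)) \<longlonglongrightarrow> 0"
    using comp unfolding compact_op_def using Fl2 Fnorm by (metis order_refl)
  define \<kappa> where "\<kappa> = sqrt (Gam - \<epsilon>) / 2"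
  have \<kappa>0: "0 < \<kappa>" using pos by (simp add: \<kappa>_def)
  have \<kappa>2: "0 < \<kappa>^2" using \<kappa>0 by simp
  obtain N0 where N0: "\<forall>n\<ge>N0. norm (\<Sum>i. (cmod (g (i + n)))^2) < \<kappa>^2"
    using suminf_exist_split[OF \<kappa>2, of "\<lambda>k. (cmod (g k))^2"] g by (auto simp: l2_def)
  have low: "\<kappa> \<le> l2norm (\<lambda>k. Ralpha \<alpha> (F (r m)) k - g k)" if m: "N0 \<le> m" for m
  proof -
    define a where "a = st (r m)"
    define b where "b = st (Suc (r m))"
    define TF where "TF = Ralpha \<alpha> (F (r m))"
    have TFl2: "l2 TF" unfolding TF_def by (rule Tl2[OF Fl2])
    have aN: "N0 \<le> a"
    proof -
      have "m \<le> r m" using r by (rule seq_suble)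
      moreover have "r m \<le> st (r m)" using smono by (rule seq_suble)
      ultimately show ?thesis using m by (simp add: a_def)
    qed
    have tl: "(\<Sum>i. (cmod (g (i + a)))^2) < \<kappa>^2"
    proof -
      have "0 \<le> (\<Sum>i. (cmod (g (i + a)))^2)"
        using g by (intro suminf_nonneg summable_ignore_initial_segment) (auto simp: l2_def)
      then show ?thesis using N0 aN by force
    qed
    have gb: "L2_set (\<lambda>k. cmod (g k)) {a..<b} < \<kappa>"
    proof -
      have "(\<Sum>k\<in>{a..<b}. (cmod (g k))^2) < \<kappa>^2"
        using block_tail_le[of g a b] g tl by (simp add: l2_def)
      then have "sqrt (\<Sum>k\<in>{a..<b}. (cmod (g k))^2) < sqrt (\<kappa>^2)" by (rule real_sqrt_less_mono)
      then show ?thesis using \<kappa>0 by (simp add: L2_set_def)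
    qed
    have fb_: "2 * \<kappa> \<le> L2_set (\<lambda>k. cmod (TF k)) {a..<b}"
    proof -
      have "Gam - \<epsilon> \<le> (\<Sum>k\<in>{a..<b}. (cmod (TF k))^2)"
        using blockval[of "r m"] by (simp add: a_def b_def TF_def)
      then have "sqrt (Gam - \<epsilon>) \<le> sqrt (\<Sum>k\<in>{a..<b}. (cmod (TF k))^2)" by (rule real_sqrt_le_mono)
      then show ?thesis by (simp add: \<kappa>_def L2_set_def)
    qed
    have tri: "L2_set (\<lambda>k. cmod (TF k)) {a..<b} \<le> L2_set (\<lambda>k. cmod (TF k - g k)) {a..<b} + L2_set (\<lambda>k. cmod (g k)) {a..<b}"
    proof -
      have "L2_set (\<lambda>k. cmod (TF k)) {a..<b} \<le> L2_set (\<lambda>k. cmod (TF k - g k) + cmod (g k)) {a..<b}"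
      proof (rule L2_set_mono)
        fix i show "cmod (TF i) \<le> cmod (TF i - g i) + cmod (g i)"
          using norm_triangle_ineq[of "TF i - g i" "g i"] by simp
      qed simp
      also have "\<dots> \<le> L2_set (\<lambda>k. cmod (TF k - g k)) {a..<b} + L2_set (\<lambda>k. cmod (g k)) {a..<b}"
        by (rule L2_set_triangle_ineq)
      finally show ?thesis .
    qed
    have "L2_set (\<lambda>k. cmod (TF k - g k)) {a..<b} \<le> l2norm (\<lambda>k. TF k - g k)"
      by (rule L2_sub_le_l2norm[OF l2_diff[OF TFl2 g]])
    then show ?thesis using tri fb_ gb by (simp add: TF_def)
  qed
  have "\<forall>\<^sub>F m in sequentially. l2norm (\<lambda>k. Ralpha \<alpha> (F (r m)) k - g k) < \<kappa>"
    using order_tendstoD(2)[OF lim \<kappa>0] .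
  then obtain M where M: "\<And>m. M \<le> m \<Longrightarrow> l2norm (\<lambda>k. Ralpha \<alpha> (F (r m)) k - g k) < \<kappa>"
    unfolding eventually_sequentially by blast
  have "\<kappa> \<le> l2norm (\<lambda>k. Ralpha \<alpha> (F (r (max M N0))) k - g k)" by (rule low) simp
  moreover have "l2norm (\<lambda>k. Ralpha \<alpha> (F (r (max M N0))) k - g k) < \<kappa>" by (rule M) simp
  ultimately show False by simp
qed

end

context RS begin

lemma compact_imp_Gam0: assumes "compact_op (Ralpha \<alpha>)" shows "Gam = 0"
proof (rule ccontr)
  assume "Gam \<noteq> 0"
  then have G0: "0 < Gam" using Gam_nonneg by simp
  have e: "0 < Gam / 2" "Gam / 2 < Gam" using G0 by auto
  obtain st fb where "blocks \<alpha> C (Gam / 2) st fb" using blocks_interp[OF e] by blast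
  then interpret B: blocks \<alpha> C "Gam / 2" st fb .
  have "\<not> compact_op (Ralpha \<alpha>)" by (rule B.not_compact) (use G0 in simp)
  then show False using assms by simp
qed

end


lemma coord_le: assumes "l2 f" shows "cmod (f j) \<le> l2norm f"
proof -
  have "(cmod (f j))^2 \<le> (\<Sum>k<Suc j. (cmod (f k))^2)"
    by (rule member_le_sum[of j "{..<Suc j}" "\<lambda>k. (cmod (f k))^2"]) auto
  also have "\<dots> \<le> (l2norm f)^2" by (rule l2_partial_le[OF assms])
  finally have "(cmod (f j))^2 \<le> (l2norm f)^2" .
  then show ?thesis by (rule power2_le_imp_le) (simp add: assms)
qed

lemma tail_norm_le:
  assumes f: "l2 f"
  shows "l2 (\<lambda>j. if j < N then 0 else f j)" "l2norm (\<lambda>j. if j < N then 0 else f j) \<le> l2norm f"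
proof -
  define u where "u = (\<lambda>j. if j < N then 0 else f j)"
  have fu: "(\<lambda>j. f j - trunc N f j) = u" by (simp add: u_def trunc_def fun_eq_iff)
  have ul2: "l2 u" using l2_diff[OF f trunc_l2[of N f]] fu by simp
  then show "l2 (\<lambda>j. if j < N then 0 else f j)" by (simp add: u_def)
  have "(l2norm u)^2 \<le> (l2norm f)^2"
  proof -
    have "(\<Sum>k. (cmod (u k))^2) \<le> (\<Sum>k. (cmod (f k))^2)"
      using ul2 f by (intro suminf_le) (auto simp: l2_def u_def)
    then show ?thesis using l2norm_sq[OF ul2] l2norm_sq[OF f] by simp
  qed
  then have "l2norm u \<le> l2norm f" by (rule power2_le_imp_le) (simp add: f)
  then show "l2norm (\<lambda>j. if j < N then 0 else f j) \<le> l2norm f" by (simp add: u_def)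
qed

context RS begin

lemma trunc_T_le:
  assumes u: "l2 u"
  shows "l2norm (Ralpha \<alpha> (trunc N u)) \<le> sqrt (suminf (ww \<alpha>)) * (\<Sum>j<N. cmod (u j))"
proof -
  define S where "S = (\<Sum>j<N. cmod (u j))"
  have S0: "0 \<le> S" by (simp add: S_def sum_nonneg)
  have SSb: "cmod (SS (trunc N u) k) \<le> S" for k
  proof -
    have "cmod (SS (trunc N u) k) \<le> (\<Sum>j\<le>k. cmod (trunc N u j))" unfolding SS_def by (rule norm_sum)
    also have "\<dots> = (\<Sum>j\<in>{..k} \<inter> {..<N}. cmod (u j))"
      by (simp add: trunc_def sum.inter_restrict if_distrib cong: if_cong)
    also have "\<dots> \<le> S" unfolding S_def by (rule sum_mono2) auto
    finally show ?thesis .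
  qed
  have tl2: "l2 (Ralpha \<alpha> (trunc N u))" by (rule Tl2[OF trunc_l2])
  have pt: "(cmod (Ralpha \<alpha> (trunc N u) k))^2 \<le> ww \<alpha> k * S^2" for k
    unfolding Ralpha_norm2 using SSb[of k] by (intro mult_left_mono power_mono) auto
  have "(\<Sum>k. (cmod (Ralpha \<alpha> (trunc N u) k))^2) \<le> (\<Sum>k. ww \<alpha> k * S^2)"
    using tl2 ww_summable pt by (intro suminf_le) (auto simp: l2_def intro: summable_mult2)
  also have "\<dots> = suminf (ww \<alpha>) * S^2" by (rule suminf_mult2[OF ww_summable, symmetric])
  finally have "(l2norm (Ralpha \<alpha> (trunc N u)))^2 \<le> suminf (ww \<alpha>) * S^2"
    using l2norm_sq[OF tl2] by simp
  then have "l2norm (Ralpha \<alpha> (trunc N u)) \<le> sqrt (suminf (ww \<alpha>) * S^2)" using tl2 by (intro real_le_rsqrt)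
  also have "\<dots> = sqrt (suminf (ww \<alpha>)) * S" using S0 by (simp add: real_sqrt_mult)
  finally show ?thesis by (simp add: S_def)
qed

lemma tailT_le:
  assumes u: "l2 u" and c: "l2norm u \<le> c"
  shows "l2norm (Ralpha \<alpha> (\<lambda>j. if j < N then 0 else u j)) \<le> sqrt (G N) * c"
proof -
  define v where "v = (\<lambda>j. if j < N then 0 else u j)"
  have vl2: "l2 v" unfolding v_def by (rule tail_norm_le(1)[OF u])
  have vn: "l2norm v \<le> c" using tail_norm_le(2)[OF u, of N] c by (simp add: v_def)
  have c0: "0 \<le> c" using c l2norm_nonneg[OF u] by linarith
  have "(l2norm (Ralpha \<alpha> v))^2 \<le> G N * (l2norm v)^2" by (rule tail_le[OF vl2]) (simp add: v_def)
  also have "\<dots> \<le> G N * c^2" using vn vl2 G_nonneg by (intro mult_left_mono power_mono) auto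
  also have "\<dots> = (sqrt (G N) * c)^2" using G_nonneg by (simp add: power_mult_distrib)
  finally have "(l2norm (Ralpha \<alpha> v))^2 \<le> (sqrt (G N) * c)^2" .
  then have "l2norm (Ralpha \<alpha> v) \<le> sqrt (G N) * c" by (rule power2_le_imp_le) (simp add: c0 G_nonneg)
  then show ?thesis by (simp add: v_def)
qed

lemma Gam0_imp_compact: assumes G0: "Gam = 0" shows "compact_op (Ralpha \<alpha>)"
  unfolding compact_op_def
proof (intro allI impI)
  fix F :: "nat \<Rightarrow> nat \<Rightarrow> complex" and B :: real
  assume FB: "\<forall>m. l2 (F m) \<and> l2norm (F m) \<le> B"
  have Fl2: "l2 (F m)" and FBm: "l2norm (F m) \<le> B" for m using FB by auto
  have B0: "0 \<le> B" using FBm[of 0] l2norm_nonneg[OF Fl2[of 0]] by linarith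
  have cb: "cmod (F m j) \<le> B" for m j using coord_le[OF Fl2[of m], of j] FBm[of m] by linarith
  interpret D: subseqs "\<lambda>j s. \<exists>l. (\<lambda>m. F (s m) j) \<longlonglongrightarrow> l"
  proof
    fix j and s :: "nat \<Rightarrow> nat"
    assume "strict_mono s"
    have "bounded (range (\<lambda>m. F (s m) j))"
      unfolding bounded_iff using cb by blast
    then obtain l r' where "strict_mono r'" "((\<lambda>m. F (s m) j) \<circ> r') \<longlonglongrightarrow> l"
      using bounded_imp_convergent_subsequence by blast
    then show "\<exists>r'. strict_mono r' \<and> (\<exists>l. (\<lambda>m. F ((s \<circ> r') m) j) \<longlonglongrightarrow> l)"
      by (auto simp: o_def)
  qed
  define r where "r = D.diagseq"
  have rmono: "strict_mono r" unfolding r_def by (rule D.subseq_diagseq)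
  have conv: "\<exists>l. (\<lambda>m. F (r m) j) \<longlonglongrightarrow> l" for j
  proof -
    obtain l where "(\<lambda>i. F ((D.diagseq \<circ> (+) (Suc j)) i) j) \<longlonglongrightarrow> l"
    proof (atomize_elim, rule D.diagseq_holds)
      fix r s n
      assume "strict_mono (r :: nat \<Rightarrow> nat)"
      assume "\<exists>l. (\<lambda>m. F (s m) n) \<longlonglongrightarrow> l"
      then obtain l where "((\<lambda>i. F i n) \<circ> s) \<longlonglongrightarrow> l" by (auto simp: o_def)
      hence "((\<lambda>i. F i n) \<circ> s \<circ> r) \<longlonglongrightarrow> l" using \<open>strict_mono r\<close> by (rule LIMSEQ_subseq_LIMSEQ)
      thus "\<exists>l. (\<lambda>m. F ((s \<circ> r) m) n) \<longlonglongrightarrow> l" by (auto simp add: o_def)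
    qed
    hence "(\<lambda>i. F (D.diagseq (i + Suc j)) j) \<longlonglongrightarrow> l" by (simp add: ac_simps)
    hence "(\<lambda>i. F (D.diagseq i) j) \<longlonglongrightarrow> l" by (rule LIMSEQ_offset)
    thus ?thesis unfolding r_def ..
  qed
  have "\<forall>j. \<exists>l. (\<lambda>m. F (r m) j) \<longlonglongrightarrow> l" using conv by blast
  from choice[OF this] obtain \<phi> where \<phi>0: "\<forall>j. (\<lambda>m. F (r m) j) \<longlonglongrightarrow> \<phi> j" by blast
  have \<phi>: "\<And>j. (\<lambda>m. F (r m) j) \<longlonglongrightarrow> \<phi> j" using \<phi>0 by blast
  have part: "(\<Sum>j<K. (cmod (\<phi> j))^2) \<le> B^2" for K
  proof -
    have "(\<lambda>m. \<Sum>j<K. (cmod (F (r m) j))^2) \<longlonglongrightarrow> (\<Sum>j<K. (cmod (\<phi> j))^2)"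
      by (intro tendsto_intros \<phi>)
    moreover have "(\<Sum>j<K. (cmod (F (r m) j))^2) \<le> B^2" for m
    proof -
      have "(\<Sum>j<K. (cmod (F (r m) j))^2) \<le> (l2norm (F (r m)))^2" by (rule l2_partial_le[OF Fl2])
      also have "\<dots> \<le> B^2" using FBm[of "r m"] l2norm_nonneg[OF Fl2[of "r m"]] by (intro power_mono) auto
      finally show ?thesis .
    qed
    ultimately show ?thesis by (intro LIMSEQ_le_const2) auto
  qed
  have \<phi>l2: "l2 \<phi>" unfolding l2_def by (rule summableI_nonneg_bounded[of _ "B^2"]) (auto intro: part)
  have \<phi>B: "l2norm \<phi> \<le> B"
  proof -
    have "(l2norm \<phi>)^2 \<le> B^2" unfolding l2norm_sq[OF \<phi>l2]
      using \<phi>l2 part by (intro suminf_le_const) (auto simp: l2_def)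
    then show ?thesis by (rule power2_le_imp_le) (simp add: B0)
  qed
  define u where "u m = (\<lambda>k. F (r m) k - \<phi> k)" for m
  have ul2: "l2 (u m)" for m unfolding u_def by (rule l2_diff[OF Fl2 \<phi>l2])
  have uB: "l2norm (u m) \<le> 2 * B" for m
  proof -
    have "l2norm (u m) \<le> l2norm (F (r m)) + l2norm \<phi>" unfolding u_def by (rule l2norm_triangle_diff[OF Fl2 \<phi>l2])
    then show ?thesis using FBm[of "r m"] \<phi>B by linarith
  qed
  have Tu: "(\<lambda>k. Ralpha \<alpha> (F (r m)) k - Ralpha \<alpha> \<phi> k) = Ralpha \<alpha> (u m)" for m
    unfolding u_def Ralpha_diff ..
  have "(\<lambda>m. l2norm (\<lambda>k. Ralpha \<alpha> (F (r m)) k - Ralpha \<alpha> \<phi> k)) \<longlonglongrightarrow> 0"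
  proof (rule LIMSEQ_I)
    fix \<eta> :: real assume \<eta>: "0 < \<eta>"
    have \<eta>2: "0 < \<eta> / 2" using \<eta> by simp
    have "(\<lambda>N. sqrt (G N) * (2 * B)) \<longlonglongrightarrow> sqrt Gam * (2 * B)" using G_lim by (intro tendsto_intros)
    then have "(\<lambda>N. sqrt (G N) * (2 * B)) \<longlonglongrightarrow> 0" using G0 by simp
    from order_tendstoD(2)[OF this \<eta>2] obtain N where N: "sqrt (G N) * (2 * B) < \<eta> / 2"
      unfolding eventually_sequentially by blast
    have "(\<lambda>m. sqrt (suminf (ww \<alpha>)) * (\<Sum>j<N. cmod (u m j))) \<longlonglongrightarrow> sqrt (suminf (ww \<alpha>)) * (\<Sum>j<N. cmod (\<phi> j - \<phi> j))"
      unfolding u_def by (intro tendsto_intros \<phi>)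
    then have "(\<lambda>m. sqrt (suminf (ww \<alpha>)) * (\<Sum>j<N. cmod (u m j))) \<longlonglongrightarrow> 0" by simp
    from order_tendstoD(2)[OF this \<eta>2] obtain m0 where m0: "\<And>m. m0 \<le> m \<Longrightarrow> sqrt (suminf (ww \<alpha>)) * (\<Sum>j<N. cmod (u m j)) < \<eta> / 2"
      unfolding eventually_sequentially by blast
    have "l2norm (Ralpha \<alpha> (u m)) < \<eta>" if m: "m0 \<le> m" for m
    proof -
      define v where "v = (\<lambda>j. if j < N then 0 else u m j)"
      have split: "u m = (\<lambda>j. trunc N (u m) j + v j)" by (simp add: trunc_def v_def fun_eq_iff)
      have vl2: "l2 v" unfolding v_def by (rule tail_norm_le(1)[OF ul2])
      have "Ralpha \<alpha> (u m) = (\<lambda>k. Ralpha \<alpha> (trunc N (u m)) k + Ralpha \<alpha> v k)"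
        by (subst split) (rule Ralpha_add)
      then have "l2norm (Ralpha \<alpha> (u m)) \<le> l2norm (Ralpha \<alpha> (trunc N (u m))) + l2norm (Ralpha \<alpha> v)"
        using l2norm_triangle[OF Tl2[OF trunc_l2] Tl2[OF vl2]] by simp
      also have "l2norm (Ralpha \<alpha> (trunc N (u m))) \<le> sqrt (suminf (ww \<alpha>)) * (\<Sum>j<N. cmod (u m j))"
        by (rule trunc_T_le[OF ul2])
      also have "l2norm (Ralpha \<alpha> v) \<le> sqrt (G N) * (2 * B)"
        unfolding v_def by (rule tailT_le[OF ul2 uB])
      finally show ?thesis using m0[OF m] N by linarith
    qed
    then show "\<exists>no. \<forall>m\<ge>no. norm (l2norm (\<lambda>k. Ralpha \<alpha> (F (r m)) k - Ralpha \<alpha> \<phi> k) - 0) < \<eta>"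
      using Tu l2norm_nonneg[OF Tl2[OF ul2]] by (intro exI[of _ m0]) auto
  qed
  then show "\<exists>g r. l2 g \<and> strict_mono r \<and> (\<lambda>m. l2norm (\<lambda>k. Ralpha \<alpha> (F (r m)) k - g k)) \<longlonglongrightarrow> 0"
    using Tl2[OF \<phi>l2] rmono by blast
qed

end

theorem theorem4p5:
  fixes \<alpha> :: "nat \<Rightarrow> complex"
  assumes "l2 \<alpha>"
    and "bounded_op (Ralpha \<alpha>)"
  shows "\<exists>\<L>. (\<lambda>n. Ltail \<alpha> n) \<longlonglongrightarrow> \<L> \<and>
           ess_norm (Ralpha \<alpha>) = \<L> / sqrt 2 \<and>
           (compact_op (Ralpha \<alpha>) \<longleftrightarrow> \<L> = 0)"
proof -
  obtain C where T2: "\<forall>f. l2 f \<longrightarrow> l2 (Ralpha \<alpha> f)" and C: "\<forall>f. l2 f \<longrightarrow> l2norm (Ralpha \<alpha> f) \<le> C * l2norm f"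
    using assms(2) unfolding bounded_op_def by blast
  interpret R: RS \<alpha> "max C 0"
  proof
    show "l2 \<alpha>" by (rule assms(1))
    show "\<And>f. l2 f \<Longrightarrow> l2 (Ralpha \<alpha> f)" using T2 by blast
    show "0 \<le> max C 0" by simp
    fix f assume f: "l2 f"
    have "l2norm (Ralpha \<alpha> f) \<le> C * l2norm f" using C f by blast
    also have "\<dots> \<le> max C 0 * l2norm f" using f by (intro mult_right_mono) auto
    finally show "l2norm (Ralpha \<alpha> f) \<le> max C 0 * l2norm f" .
  qed
  have lim: "(\<lambda>n. Ltail \<alpha> n) \<longlonglongrightarrow> sqrt (2 * R.Gam)" by (rule R.Ltail_lim)
  have ess: "ess_norm (Ralpha \<alpha>) = sqrt (2 * R.Gam) / sqrt 2"
    using R.ess_norm_val by (simp add: real_sqrt_mult)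
  have comp: "compact_op (Ralpha \<alpha>) \<longleftrightarrow> sqrt (2 * R.Gam) = 0"
    using R.compact_imp_Gam0 R.Gam0_imp_compact by auto
  show ?thesis using lim ess comp by blast
qed


end
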